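(* Let $G$ be as in the context. If $(x_n)\subset G$ is a Cauchy sequence for $d_{\mathcal{I}}$, then it is a Cauchy sequence for the norm $\|\cdot\|_2$, i.e. $\|x_n-x_m\|_2\to0$ as $n,m\to\infty$.
   Context: $\mathcal{H}$ is an infinite dimensional complex Hilbert space, $\mathcal{B}_2(\mathcal{H})$ the Hilbert–Schmidt operators with $\|a\|_2=\mathrm{Tr}(a^*a)^{1/2}$. ${\rm GL}_2(\mathcal{H})=\{g\in{\rm GL}(\mathcal{H}): g-1\in\mathcal{B}_2(\mathcal{H})\}$ (so $x_n-x_m\in\mathcal{B}_2(\mathcal{H})$). $G$ is a closed, connected, self-adjoint ($G^*=G$) Banach–Lie subgroup of ${\rm GL}_2(\mathcal{H})$ with closed Lie algebra $\mathfrak{g}\subset\mathcal{B}_2(\mathcal{H})$. $d_{\mathcal{I}}(p,q)$ is the infimum of $\int_0^1\|\alpha^{-1}\dot\alpha\|_2dt$ over piecewise smooth curves $\alpha$ in $G$ joining $p$ to $q$. *)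

theory Defs
  imports "HOL-Analysis.Analysis"
begin

text \<open>The Hilbert space H is modelled as l2 over an (infinite) index type 'i,
  i.e. via an orthonormal basis; operators are represented by their matrices
  with respect to that basis.  Every element of GL_2(H) is of the form 1 + a
  with a Hilbert-Schmidt, so all operators that occur are given by matrices.\<close>

type_synonym 'i mat = "'i \<Rightarrow> 'i \<Rightarrow> complex"

definition mid :: "'i mat" where
  "mid = (\<lambda>i j. if i = j then 1 else 0)"

definition msub :: "'i mat \<Rightarrow> 'i mat \<Rightarrow> 'i mat" where
  "msub a b = (\<lambda>i j. a i j - b i j)"

definition mscale :: "real \<Rightarrow> 'i mat \<Rightarrow> 'i mat" where
  "mscale t a = (\<lambda>i j. complex_of_real t * a i j)"

definition mmul :: "'i mat \<Rightarrow> 'i mat \<Rightarrow> 'i mat" where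
  "mmul a b = (\<lambda>i j. infsum (\<lambda>k. a i k * b k j) UNIV)"

definition madj :: "'i mat \<Rightarrow> 'i mat" where
  "madj a = (\<lambda>i j. cnj (a j i))"

text \<open>Hilbert-Schmidt operators and the norm \<open>\<parallel>a\<parallel>_2 = Tr(a* a)^(1/2)\<close>,
  where Tr(a* a) = sum over j of \<open>\<parallel>a e_j\<parallel>^2\<close> = sum over (i,j) of |a_ij|^2.\<close>
definition hs :: "'i mat \<Rightarrow> bool" where
  "hs a \<longleftrightarrow> (\<lambda>(i,j). (cmod (a i j))\<^sup>2) summable_on UNIV"

definition hs_norm :: "'i mat \<Rightarrow> real" where
  "hs_norm a = sqrt (infsum (\<lambda>(i,j). (cmod (a i j))\<^sup>2) UNIV)"

text \<open>GL_2(H) = {g in GL(H) : g - 1 Hilbert-Schmidt}; the inverse of such g is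
  automatically of the form 1 + (Hilbert-Schmidt).\<close>
definition GL2 :: "'i mat set" where
  "GL2 = {g. hs (msub g mid) \<and>
             (\<exists>h. hs (msub h mid) \<and> mmul g h = mid \<and> mmul h g = mid)}"

definition minv :: "'i mat \<Rightarrow> 'i mat" where
  "minv g = (THE h. hs (msub h mid) \<and> mmul g h = mid \<and> mmul h g = mid)"

fun mpow :: "'i mat \<Rightarrow> nat \<Rightarrow> 'i mat" where
  "mpow a 0 = mid"
| "mpow a (Suc n) = mmul a (mpow a n)"

definition mexp_partial :: "'i mat \<Rightarrow> nat \<Rightarrow> 'i mat" where
  "mexp_partial X n = (\<lambda>i j. \<Sum>k<n. mpow X k i j / of_nat (fact k))"

definition mexp :: "'i mat \<Rightarrow> 'i mat" where
  "mexp X = (THE E. hs (msub E mid) \<and>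
               (\<lambda>n. hs_norm (msub (mexp_partial X n) E)) \<longlonglongrightarrow> 0)"

definition hs_rel_open :: "'i mat set \<Rightarrow> 'i mat set \<Rightarrow> bool" where
  "hs_rel_open S U \<longleftrightarrow> U \<subseteq> S \<and>
     (\<forall>g\<in>U. \<exists>r>0. \<forall>h\<in>S. hs_norm (msub h g) < r \<longrightarrow> h \<in> U)"

definition hs_connected :: "'i mat set \<Rightarrow> bool" where
  "hs_connected S \<longleftrightarrow> \<not> (\<exists>A B. A \<inter> B = {} \<and> A \<union> B = S \<and> A \<noteq> {} \<and> B \<noteq> {} \<and>
                                 hs_rel_open S A \<and> hs_rel_open S B)"

definition hs_closed_in_GL2 :: "'i mat set \<Rightarrow> bool" where
  "hs_closed_in_GL2 S \<longleftrightarrow>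
     (\<forall>g\<in>GL2. (\<forall>e>0. \<exists>h\<in>S. hs_norm (msub h g) < e) \<longrightarrow> g \<in> S)"

definition is_subgroup_GL2 :: "'i mat set \<Rightarrow> bool" where
  "is_subgroup_GL2 G \<longleftrightarrow> G \<subseteq> GL2 \<and> mid \<in> G \<and>
     (\<forall>g\<in>G. \<forall>h\<in>G. mmul g h \<in> G) \<and> (\<forall>g\<in>G. minv g \<in> G)"

definition self_adjoint_set :: "'i mat set \<Rightarrow> bool" where
  "self_adjoint_set G \<longleftrightarrow> (\<forall>g\<in>G. madj g \<in> G)"

definition lie_alg :: "'i mat set \<Rightarrow> 'i mat set" where
  "lie_alg G = {X. hs X \<and> (\<forall>t::real. mexp (mscale t X) \<in> G)}"

definition closed_hs_subspace :: "'i mat set \<Rightarrow> bool" where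
  "closed_hs_subspace V \<longleftrightarrow> V \<subseteq> {X. hs X} \<and> (\<lambda>i j. 0) \<in> V \<and>
     (\<forall>X\<in>V. \<forall>Y\<in>V. (\<lambda>i j. X i j + Y i j) \<in> V) \<and>
     (\<forall>t. \<forall>X\<in>V. mscale t X \<in> V) \<and>
     (\<forall>X. hs X \<and> (\<forall>e>0. \<exists>Y\<in>V. hs_norm (msub Y X) < e) \<longrightarrow> X \<in> V)"

definition banach_lie_subgroup :: "'i mat set \<Rightarrow> bool" where
  "banach_lie_subgroup G \<longleftrightarrow> is_subgroup_GL2 G \<and> closed_hs_subspace (lie_alg G) \<and>
     (\<exists>e>0. \<exists>U. hs_rel_open G U \<and> mid \<in> U \<and>
        bij_betw mexp {X\<in>lie_alg G. hs_norm X < e} U \<and>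
        (\<forall>X\<in>{X\<in>lie_alg G. hs_norm X < e}. \<forall>r>0. \<exists>d>0. \<forall>Y\<in>{X\<in>lie_alg G. hs_norm X < e}.
            hs_norm (msub Y X) < d \<longrightarrow> hs_norm (msub (mexp Y) (mexp X)) < r) \<and>
        (\<forall>X\<in>{X\<in>lie_alg G. hs_norm X < e}. \<forall>r>0. \<exists>d>0. \<forall>Y\<in>{X\<in>lie_alg G. hs_norm X < e}.
            hs_norm (msub (mexp Y) (mexp X)) < d \<longrightarrow> hs_norm (msub Y X) < r))"

definition hs_cont_on :: "real set \<Rightarrow> (real \<Rightarrow> 'i mat) \<Rightarrow> bool" where
  "hs_cont_on S f \<longleftrightarrow>
     (\<forall>t\<in>S. ((\<lambda>s. hs_norm (msub (f s) (f t))) \<longlongrightarrow> 0) (at t within S))"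

definition hs_deriv_within :: "(real \<Rightarrow> 'i mat) \<Rightarrow> 'i mat \<Rightarrow> real \<Rightarrow> real set \<Rightarrow> bool" where
  "hs_deriv_within \<alpha> D t S \<longleftrightarrow> hs D \<and>
     ((\<lambda>s. hs_norm (\<lambda>i j. (\<alpha> s i j - \<alpha> t i j) / complex_of_real (s - t) - D i j))
        \<longlongrightarrow> 0) (at t within S)"

definition hs_pw_smooth :: "(real \<Rightarrow> 'i mat) \<Rightarrow> bool" where
  "hs_pw_smooth \<alpha> \<longleftrightarrow> (\<exists>T::real set. finite T \<and> {0,1} \<subseteq> T \<and> T \<subseteq> {0..1} \<and>
     (\<forall>a\<in>T. \<forall>b\<in>T. a < b \<and> {a<..<b} \<inter> T = {} \<longrightarrow>
        (\<exists>D. (\<forall>t\<in>{a..b}. hs_deriv_within \<alpha> (D t) t {a..b}) \<and> hs_cont_on {a..b} D)))"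

text \<open>velocity (defined except at finitely many points)\<close>
definition hs_vel :: "(real \<Rightarrow> 'i mat) \<Rightarrow> real \<Rightarrow> 'i mat" where
  "hs_vel \<alpha> t = (SOME D. hs_deriv_within \<alpha> D t {0..1})"

definition curve_length :: "(real \<Rightarrow> 'i mat) \<Rightarrow> real" where
  "curve_length \<alpha> = integral {0..1} (\<lambda>t. hs_norm (mmul (minv (\<alpha> t)) (hs_vel \<alpha> t)))"

definition dI :: "'i mat set \<Rightarrow> 'i mat \<Rightarrow> 'i mat \<Rightarrow> real" where
  "dI G p q = Inf {curve_length \<alpha> | \<alpha>. hs_pw_smooth \<alpha> \<and> (\<forall>t\<in>{0..1}. \<alpha> t \<in> G) \<and>
                                      \<alpha> 0 = p \<and> \<alpha> 1 = q}"

end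

theory Submission
  imports Defs
begin


definition hsq :: "'i mat \<Rightarrow> real" where
  "hsq a = infsum (\<lambda>(i,j). (cmod (a i j))\<^sup>2) UNIV"

lemma hs_norm_hsq: "hs_norm a = sqrt (hsq a)"
  by (simp add: hs_norm_def hsq_def)

lemma hs_boundI:
  assumes "\<And>F. finite F \<Longrightarrow> (\<Sum>(i,j)\<in>F. (cmod (a i j))\<^sup>2) \<le> B"
  shows "hs a" "hsq a \<le> B"
proof -
  have s: "(\<lambda>(i,j). (cmod (a i j))\<^sup>2) summable_on UNIV"
    by (rule nonneg_bdd_above_summable_on) (auto intro!: bdd_aboveI2 assms)
  then show "hs a" by (simp add: hs_def)
  show "hsq a \<le> B" unfolding hsq_def
    by (rule infsum_le_finite_sums[OF s]) (use assms in auto)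
qed

lemma hs_sum_le:
  assumes "hs a" "finite F"
  shows "(\<Sum>(i,j)\<in>F. (cmod (a i j))\<^sup>2) \<le> hsq a"
  unfolding hsq_def
  by (rule finite_sum_le_infsum) (use assms in \<open>auto simp: hs_def\<close>)

lemma hsq_nonneg: "hsq a \<ge> 0"
  unfolding hsq_def by (rule infsum_nonneg) auto

lemma hs_norm_nonneg: "hs_norm a \<ge> 0"
  by (simp add: hs_norm_hsq hsq_nonneg)

lemma hs_entry_le:
  assumes "hs a" shows "cmod (a i j) \<le> hs_norm a"
proof -
  have "(\<Sum>(i,j)\<in>{(i,j)}. (cmod (a i j))\<^sup>2) \<le> hsq a" by (rule hs_sum_le[OF assms]) auto
  then have "(cmod (a i j))\<^sup>2 \<le> hsq a" by simp
  then show ?thesis unfolding hs_norm_hsq by (simp add: real_le_rsqrt)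
qed

lemma hs_zero: "hs (\<lambda>i j. 0)" "hs_norm (\<lambda>i j. 0) = 0"
  by (simp_all add: hs_def hs_norm_def case_prod_unfold)

lemma hs_norm_eq0:
  assumes "hs a" "hs_norm a = 0" shows "a = (\<lambda>i j. 0)"
  using hs_entry_le[OF assms(1)] assms(2) by (intro ext) force

lemma L2_aux:
  "(\<Sum>(i,j)\<in>F. (f i j)\<^sup>2) = (L2_set (\<lambda>p. f (fst p) (snd p)) F)\<^sup>2"
  by (simp add: L2_set_def case_prod_unfold sum_nonneg)

lemma hs_add:
  assumes "hs a" "hs b"
  shows "hs (\<lambda>i j. a i j + b i j)" "hs_norm (\<lambda>i j. a i j + b i j) \<le> hs_norm a + hs_norm b"
proof -
  have *: "(\<Sum>(i,j)\<in>F. (cmod (a i j + b i j))\<^sup>2) \<le> (hs_norm a + hs_norm b)\<^sup>2" if F: "finite F" for F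
  proof -
    have "L2_set (\<lambda>p. cmod (a (fst p) (snd p) + b (fst p) (snd p))) F
        \<le> L2_set (\<lambda>p. cmod (a (fst p) (snd p)) + cmod (b (fst p) (snd p))) F"
      by (rule L2_set_mono) (auto intro: norm_triangle_ineq)
    also have "\<dots> \<le> L2_set (\<lambda>p. cmod (a (fst p) (snd p))) F + L2_set (\<lambda>p. cmod (b (fst p) (snd p))) F"
      by (rule L2_set_triangle_ineq)
    also have "L2_set (\<lambda>p. cmod (a (fst p) (snd p))) F \<le> hs_norm a"
    proof -
      have "(L2_set (\<lambda>p. cmod (a (fst p) (snd p))) F)\<^sup>2 \<le> hsq a"
        using hs_sum_le[OF assms(1) F] L2_aux[of "\<lambda>i j. cmod (a i j)" F] by simp
      then show ?thesis unfolding hs_norm_hsq by (simp add: real_le_rsqrt)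
    qed
    also have "L2_set (\<lambda>p. cmod (b (fst p) (snd p))) F \<le> hs_norm b"
    proof -
      have "(L2_set (\<lambda>p. cmod (b (fst p) (snd p))) F)\<^sup>2 \<le> hsq b"
        using hs_sum_le[OF assms(2) F] L2_aux[of "\<lambda>i j. cmod (b i j)" F] by simp
      then show ?thesis unfolding hs_norm_hsq by (simp add: real_le_rsqrt)
    qed
    finally have "L2_set (\<lambda>p. cmod (a (fst p) (snd p) + b (fst p) (snd p))) F \<le> hs_norm a + hs_norm b"
      by simp
    then show ?thesis
      using L2_aux[of "\<lambda>i j. cmod (a i j + b i j)" F]
      by (simp add: L2_set_nonneg power_mono)
  qed
  show "hs (\<lambda>i j. a i j + b i j)" by (rule hs_boundI(1)) (rule *)
  have "hsq (\<lambda>i j. a i j + b i j) \<le> (hs_norm a + hs_norm b)\<^sup>2" by (rule hs_boundI(2)) (rule *)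
  then show "hs_norm (\<lambda>i j. a i j + b i j) \<le> hs_norm a + hs_norm b"
    unfolding hs_norm_hsq[of "\<lambda>i j. a i j + b i j"]
    by (simp add: hs_norm_nonneg real_sqrt_le_iff add_nonneg_nonneg real_le_lsqrt)
qed


lemma fin_bound:
  fixes f :: "'a \<Rightarrow> real"
  assumes "\<And>x. 0 \<le> f x" "\<And>F. finite F \<Longrightarrow> sum f F \<le> B"
  shows "f summable_on UNIV" "infsum f UNIV \<le> B"
proof -
  show s: "f summable_on UNIV"
    by (rule nonneg_bdd_above_summable_on) (auto intro!: bdd_aboveI2 assms)
  show "infsum f UNIV \<le> B"
    by (rule infsum_le_finite_sums[OF s]) (use assms in auto)
qed

lemma fin_le_infsum:
  fixes f :: "'a \<Rightarrow> real"
  assumes "\<And>x. 0 \<le> f x" "f summable_on UNIV" "finite F"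
  shows "sum f F \<le> infsum f UNIV"
  by (rule finite_sum_le_infsum) (use assms in auto)

lemma infsum_finsum:
  fixes f :: "'a \<Rightarrow> 'b \<Rightarrow> 'c::{topological_comm_monoid_add, t2_space}"
  assumes "finite I" "\<And>i. i \<in> I \<Longrightarrow> f i summable_on UNIV"
  shows "(\<lambda>k. \<Sum>i\<in>I. f i k) summable_on UNIV \<and>
         infsum (\<lambda>k. \<Sum>i\<in>I. f i k) UNIV = (\<Sum>i\<in>I. infsum (f i) UNIV)"
  using assms
proof (induction I rule: finite_induct)
  case empty then show ?case by simp
next
  case (insert x F)
  then have IH: "(\<lambda>k. \<Sum>i\<in>F. f i k) summable_on UNIV"
    "infsum (\<lambda>k. \<Sum>i\<in>F. f i k) UNIV = (\<Sum>i\<in>F. infsum (f i) UNIV)" by auto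
  have fx: "f x summable_on UNIV" using insert by auto
  show ?case using insert(1,2) IH
    by (simp add: summable_on_add[OF fx IH(1)] infsum_add[OF fx IH(1)])
qed

definition rowsq :: "'i mat \<Rightarrow> 'i \<Rightarrow> real" where
  "rowsq A i = infsum (\<lambda>k. (cmod (A i k))\<^sup>2) UNIV"
definition colsq :: "'i mat \<Rightarrow> 'i \<Rightarrow> real" where
  "colsq A j = infsum (\<lambda>k. (cmod (A k j))\<^sup>2) UNIV"

lemma row_fin:
  assumes "hs A" "finite F"
  shows "(\<Sum>k\<in>F. (cmod (A i k))\<^sup>2) \<le> hsq A"
proof -
  have "(\<Sum>k\<in>F. (cmod (A i k))\<^sup>2) = (\<Sum>(i',k)\<in>(\<lambda>k. (i,k)) ` F. (cmod (A i' k))\<^sup>2)"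
    by (subst sum.reindex) (auto simp: inj_on_def)
  also have "\<dots> \<le> hsq A" by (rule hs_sum_le) (use assms in auto)
  finally show ?thesis .
qed

lemma col_fin:
  assumes "hs A" "finite F"
  shows "(\<Sum>k\<in>F. (cmod (A k j))\<^sup>2) \<le> hsq A"
proof -
  have "(\<Sum>k\<in>F. (cmod (A k j))\<^sup>2) = (\<Sum>(k,j')\<in>(\<lambda>k. (k,j)) ` F. (cmod (A k j'))\<^sup>2)"
    by (subst sum.reindex) (auto simp: inj_on_def)
  also have "\<dots> \<le> hsq A" by (rule hs_sum_le) (use assms in auto)
  finally show ?thesis .
qed

lemma row_summable: "hs A \<Longrightarrow> (\<lambda>k. (cmod (A i k))\<^sup>2) summable_on UNIV"
  by (rule fin_bound(1)[where B="hsq A"]) (auto intro: row_fin)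
lemma col_summable: "hs A \<Longrightarrow> (\<lambda>k. (cmod (A k j))\<^sup>2) summable_on UNIV"
  by (rule fin_bound(1)[where B="hsq A"]) (auto intro: col_fin)

lemma rowsq_nonneg: "rowsq A i \<ge> 0"
  unfolding rowsq_def by (rule infsum_nonneg) auto
lemma colsq_nonneg: "colsq A i \<ge> 0"
  unfolding colsq_def by (rule infsum_nonneg) auto

lemma rows_sum:
  assumes "hs A" "finite I"
  shows "(\<Sum>i\<in>I. rowsq A i) \<le> hsq A"
proof -
  have e: "(\<lambda>k. \<Sum>i\<in>I. (cmod (A i k))\<^sup>2) summable_on UNIV \<and>
      infsum (\<lambda>k. \<Sum>i\<in>I. (cmod (A i k))\<^sup>2) UNIV = (\<Sum>i\<in>I. rowsq A i)"
    unfolding rowsq_def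
    by (rule infsum_finsum[where f="\<lambda>i k. (cmod (A i k))\<^sup>2"]) (use assms row_summable in auto)
  have "infsum (\<lambda>k. \<Sum>i\<in>I. (cmod (A i k))\<^sup>2) UNIV \<le> hsq A"
  proof (rule infsum_le_finite_sums)
    show "(\<lambda>k. \<Sum>i\<in>I. (cmod (A i k))\<^sup>2) summable_on UNIV" using e by blast
    fix G :: "'a set" assume G: "finite G"
    have "(\<Sum>k\<in>G. \<Sum>i\<in>I. (cmod (A i k))\<^sup>2) = (\<Sum>(i,k)\<in>I \<times> G. (cmod (A i k))\<^sup>2)"
      by (subst sum.swap) (simp add: sum.cartesian_product)
    also have "\<dots> \<le> hsq A" by (rule hs_sum_le) (use assms G in auto)
    finally show "(\<Sum>k\<in>G. \<Sum>i\<in>I. (cmod (A i k))\<^sup>2) \<le> hsq A" .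
  qed
  then show ?thesis using e by simp
qed

lemma cols_sum:
  assumes "hs A" "finite J"
  shows "(\<Sum>j\<in>J. colsq A j) \<le> hsq A"
proof -
  have e: "(\<lambda>k. \<Sum>j\<in>J. (cmod (A k j))\<^sup>2) summable_on UNIV \<and>
      infsum (\<lambda>k. \<Sum>j\<in>J. (cmod (A k j))\<^sup>2) UNIV = (\<Sum>j\<in>J. colsq A j)"
    unfolding colsq_def
    by (rule infsum_finsum[where f="\<lambda>j k. (cmod (A k j))\<^sup>2"]) (use assms col_summable in auto)
  have "infsum (\<lambda>k. \<Sum>j\<in>J. (cmod (A k j))\<^sup>2) UNIV \<le> hsq A"
  proof (rule infsum_le_finite_sums)
    show "(\<lambda>k. \<Sum>j\<in>J. (cmod (A k j))\<^sup>2) summable_on UNIV" using e by blast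
    fix G :: "'a set" assume G: "finite G"
    have "(\<Sum>k\<in>G. \<Sum>j\<in>J. (cmod (A k j))\<^sup>2) = (\<Sum>(k,j)\<in>G \<times> J. (cmod (A k j))\<^sup>2)"
      by (simp add: sum.cartesian_product)
    also have "\<dots> \<le> hsq A" by (rule hs_sum_le) (use assms G in auto)
    finally show "(\<Sum>k\<in>G. \<Sum>j\<in>J. (cmod (A k j))\<^sup>2) \<le> hsq A" .
  qed
  then show ?thesis using e by simp
qed

lemma L2_le_sqrt_infsum:
  fixes f :: "'a \<Rightarrow> real"
  assumes "(\<lambda>k. (f k)\<^sup>2) summable_on UNIV" "finite F"
  shows "L2_set f F \<le> sqrt (infsum (\<lambda>k. (f k)\<^sup>2) UNIV)"
  unfolding L2_set_def
  by (rule real_sqrt_le_mono, rule fin_le_infsum) (use assms in auto)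

lemma mm_abs:
  assumes "hs A" "hs B"
  shows "(\<lambda>k. norm (A i k * B k j)) summable_on UNIV"
    "infsum (\<lambda>k. norm (A i k * B k j)) UNIV \<le> sqrt (rowsq A i) * sqrt (colsq B j)"
proof -
  have *: "(\<Sum>k\<in>F. norm (A i k * B k j)) \<le> sqrt (rowsq A i) * sqrt (colsq B j)" if F: "finite F" for F
  proof -
    have "(\<Sum>k\<in>F. norm (A i k * B k j)) = (\<Sum>k\<in>F. \<bar>cmod (A i k)\<bar> * \<bar>cmod (B k j)\<bar>)"
      by (simp add: norm_mult)
    also have "\<dots> \<le> L2_set (\<lambda>k. cmod (A i k)) F * L2_set (\<lambda>k. cmod (B k j)) F"
      by (rule L2_set_mult_ineq)
    also have "\<dots> \<le> sqrt (rowsq A i) * sqrt (colsq B j)"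
    proof -
      have a: "L2_set (\<lambda>k. cmod (A i k)) F \<le> sqrt (rowsq A i)"
        unfolding rowsq_def by (rule L2_le_sqrt_infsum[OF row_summable[OF assms(1)] F])
      have b: "L2_set (\<lambda>k. cmod (B k j)) F \<le> sqrt (colsq B j)"
        unfolding colsq_def by (rule L2_le_sqrt_infsum[OF col_summable[OF assms(2)] F])
      show ?thesis by (rule mult_mono[OF a b]) (auto simp: rowsq_nonneg L2_set_nonneg)
    qed
    finally show ?thesis .
  qed
  show "(\<lambda>k. norm (A i k * B k j)) summable_on UNIV"
    by (rule fin_bound(1)) (use * in auto)
  show "infsum (\<lambda>k. norm (A i k * B k j)) UNIV \<le> sqrt (rowsq A i) * sqrt (colsq B j)"
    by (rule fin_bound(2)) (use * in auto)
qed

lemma mm_summable: "hs A \<Longrightarrow> hs B \<Longrightarrow> (\<lambda>k. A i k * B k j) summable_on UNIV"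
  by (rule abs_summable_summable, rule mm_abs)

lemma mmul_entry_bound:
  assumes "hs A" "hs B"
  shows "(cmod (mmul A B i j))\<^sup>2 \<le> rowsq A i * colsq B j"
proof -
  have "cmod (mmul A B i j) \<le> infsum (\<lambda>k. norm (A i k * B k j)) UNIV"
    unfolding mmul_def by (rule norm_infsum_bound, rule mm_abs[OF assms])
  also have "\<dots> \<le> sqrt (rowsq A i) * sqrt (colsq B j)" by (rule mm_abs[OF assms])
  finally have "(cmod (mmul A B i j))\<^sup>2 \<le> (sqrt (rowsq A i) * sqrt (colsq B j))\<^sup>2"
    by (rule power_mono) simp
  then show ?thesis by (simp add: power_mult_distrib rowsq_nonneg colsq_nonneg)
qed

lemma hs_mmul:
  assumes "hs A" "hs B"
  shows "hs (mmul A B)" "hs_norm (mmul A B) \<le> hs_norm A * hs_norm B"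
proof -
  have *: "(\<Sum>(i,j)\<in>F. (cmod (mmul A B i j))\<^sup>2) \<le> hsq A * hsq B" if F: "finite F" for F
  proof -
    have "(\<Sum>(i,j)\<in>F. (cmod (mmul A B i j))\<^sup>2) \<le> (\<Sum>(i,j)\<in>F. rowsq A i * colsq B j)"
      by (rule sum_mono) (auto intro: mmul_entry_bound[OF assms])
    also have "\<dots> \<le> (\<Sum>(i,j)\<in>fst ` F \<times> snd ` F. rowsq A i * colsq B j)"
      by (rule sum_mono2) (use F in \<open>auto simp: rowsq_nonneg colsq_nonneg intro!: mult_nonneg_nonneg, force+\<close>)
    also have "\<dots> = (\<Sum>i\<in>fst ` F. rowsq A i) * (\<Sum>j\<in>snd ` F. colsq B j)"
      by (simp add: sum_product sum.cartesian_product)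
    also have "\<dots> \<le> hsq A * hsq B"
      by (intro mult_mono rows_sum cols_sum assms) (use F in \<open>auto simp: hsq_nonneg sum_nonneg rowsq_nonneg colsq_nonneg\<close>)
    finally show ?thesis .
  qed
  show "hs (mmul A B)" by (rule hs_boundI(1)) (rule *)
  have "hsq (mmul A B) \<le> hsq A * hsq B" by (rule hs_boundI(2)) (rule *)
  then show "hs_norm (mmul A B) \<le> hs_norm A * hs_norm B"
    unfolding hs_norm_hsq by (simp add: real_sqrt_mult[symmetric])
qed


lemma hs_cmult:
  assumes "hs a"
  shows "hs (\<lambda>i j. c * a i j)" "hs_norm (\<lambda>i j. c * a i j) = cmod c * hs_norm a"
proof -
  have s: "(\<lambda>(i,j). (cmod (a i j))\<^sup>2) summable_on UNIV" using assms by (simp add: hs_def)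
  have e: "(\<lambda>(i,j). (cmod (c * a i j))\<^sup>2) = (\<lambda>p. (cmod c)\<^sup>2 * (\<lambda>(i,j). (cmod (a i j))\<^sup>2) p)"
    by (auto simp: norm_mult power_mult_distrib)
  show "hs (\<lambda>i j. c * a i j)" unfolding hs_def e by (rule summable_on_cmult_right[OF s])
  have "hsq (\<lambda>i j. c * a i j) = (cmod c)\<^sup>2 * hsq a"
    unfolding hsq_def e by (rule infsum_cmult_right) (use s in simp)
  then show "hs_norm (\<lambda>i j. c * a i j) = cmod c * hs_norm a"
    by (simp add: hs_norm_hsq real_sqrt_mult)
qed

lemma hs_neg: "hs a \<Longrightarrow> hs (\<lambda>i j. - a i j)"
  using hs_cmult(1)[of a "-1"] by simp

lemma hs_norm_neg: "hs a \<Longrightarrow> hs_norm (\<lambda>i j. - a i j) = hs_norm a"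
  using hs_cmult(2)[of a "-1"] by simp

lemma hs_diff: "hs a \<Longrightarrow> hs b \<Longrightarrow> hs (\<lambda>i j. a i j - b i j)"
  using hs_add(1)[of a "\<lambda>i j. - b i j"] hs_neg[of b] by simp

lemma hs_norm_diff_le: "hs a \<Longrightarrow> hs b \<Longrightarrow> hs_norm (\<lambda>i j. a i j - b i j) \<le> hs_norm a + hs_norm b"
  using hs_add(2)[of a "\<lambda>i j. - b i j"] hs_neg[of b] hs_norm_neg[of b] by simp

lemma mmul_mid_left: "mmul mid B = B"
proof (intro ext)
  fix i j
  have "mmul mid B i j = infsum (\<lambda>k. mid i k * B k j) {i}"
    unfolding mmul_def by (rule infsum_cong_neutral) (auto simp: mid_def)
  then show "mmul mid B i j = B i j" by (simp add: mid_def)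
qed

lemma mmul_mid_right: "mmul A mid = A"
proof (intro ext)
  fix i j
  have "mmul A mid i j = infsum (\<lambda>k. A i k * mid k j) {j}"
    unfolding mmul_def by (rule infsum_cong_neutral) (auto simp: mid_def)
  then show "mmul A mid i j = A i j" by (simp add: mid_def)
qed

lemma mmul_add_left:
  assumes "hs A" "hs B" "hs C"
  shows "mmul (\<lambda>i j. A i j + B i j) C = (\<lambda>i j. mmul A C i j + mmul B C i j)"
  unfolding mmul_def
  by (intro ext, simp only: distrib_right, rule infsum_add) (auto intro: mm_summable assms)

lemma mmul_add_right:
  assumes "hs A" "hs B" "hs C"
  shows "mmul A (\<lambda>i j. B i j + C i j) = (\<lambda>i j. mmul A B i j + mmul A C i j)"
  unfolding mmul_def
  by (intro ext, simp only: distrib_left, rule infsum_add) (auto intro: mm_summable assms)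

lemma mmul_cmult_left:
  "mmul (\<lambda>i j. c * A i j) B = (\<lambda>i j. c * mmul A B i j)"
  unfolding mmul_def
proof (intro ext)
  fix i j
  show "(\<Sum>\<^sub>\<infinity>k. c * A i k * B k j) = c * (\<Sum>\<^sub>\<infinity>k. A i k * B k j)"
    using infsum_cmult_right'[of c "\<lambda>k. A i k * B k j" UNIV]
    by (simp add: mult.assoc)
qed

lemma mmul_cmult_right:
  "mmul A (\<lambda>i j. c * B i j) = (\<lambda>i j. c * mmul A B i j)"
  unfolding mmul_def
proof (intro ext)
  fix i j
  show "(\<Sum>\<^sub>\<infinity>k. A i k * (c * B k j)) = c * (\<Sum>\<^sub>\<infinity>k. A i k * B k j)"
    using infsum_cmult_right'[of c "\<lambda>k. A i k * B k j" UNIV]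
    by (simp add: algebra_simps)
qed

lemma mmul_assoc:
  assumes "hs A" "hs B" "hs C"
  shows "mmul (mmul A B) C = mmul A (mmul B C)"
proof (intro ext)
  fix i j
  let ?f = "\<lambda>k l. A i k * B k l * C l j"
  have fin: "(\<Sum>p\<in>F. norm (?f (fst p) (snd p))) \<le> sqrt (rowsq A i * colsq C j) * hs_norm B"
    if F: "finite F" for F
  proof -
    have "(\<Sum>p\<in>F. norm (?f (fst p) (snd p)))
        = (\<Sum>p\<in>F. \<bar>cmod (A i (fst p)) * cmod (C (snd p) j)\<bar> * \<bar>cmod (B (fst p) (snd p))\<bar>)"
      by (simp add: norm_mult abs_mult mult_ac)
    also have "\<dots> \<le> L2_set (\<lambda>p. cmod (A i (fst p)) * cmod (C (snd p) j)) F
                    * L2_set (\<lambda>p. cmod (B (fst p) (snd p))) F"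
      by (rule L2_set_mult_ineq)
    also have "\<dots> \<le> sqrt (rowsq A i * colsq C j) * hs_norm B"
    proof (rule mult_mono)
      have "(\<Sum>p\<in>F. (cmod (A i (fst p)) * cmod (C (snd p) j))\<^sup>2)
          \<le> (\<Sum>p\<in>fst ` F \<times> snd ` F. (cmod (A i (fst p)) * cmod (C (snd p) j))\<^sup>2)"
        by (rule sum_mono2) (use F in force)+
      also have "\<dots> = (\<Sum>k\<in>fst ` F. (cmod (A i k))\<^sup>2) * (\<Sum>l\<in>snd ` F. (cmod (C l j))\<^sup>2)"
        by (simp add: sum_product sum.cartesian_product power_mult_distrib case_prod_unfold)
      also have "\<dots> \<le> rowsq A i * colsq C j"
      proof -
        have a: "(\<Sum>k\<in>fst ` F. (cmod (A i k))\<^sup>2) \<le> rowsq A i"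
          unfolding rowsq_def by (rule fin_le_infsum[OF _ row_summable[OF assms(1)]]) (use F in auto)
        have b: "(\<Sum>l\<in>snd ` F. (cmod (C l j))\<^sup>2) \<le> colsq C j"
          unfolding colsq_def by (rule fin_le_infsum[OF _ col_summable[OF assms(3)]]) (use F in auto)
        show ?thesis by (rule mult_mono[OF a b]) (auto simp: rowsq_nonneg sum_nonneg)
      qed
      finally show "L2_set (\<lambda>p. cmod (A i (fst p)) * cmod (C (snd p) j)) F \<le> sqrt (rowsq A i * colsq C j)"
        unfolding L2_set_def by (rule real_sqrt_le_mono)
      have "(\<Sum>p\<in>F. (cmod (B (fst p) (snd p)))\<^sup>2) \<le> hsq B"
        using hs_sum_le[OF assms(2) F] by (simp add: case_prod_unfold)
      then show "L2_set (\<lambda>p. cmod (B (fst p) (snd p))) F \<le> hs_norm B"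
        unfolding L2_set_def hs_norm_hsq by (rule real_sqrt_le_mono)
    qed (auto simp: L2_set_nonneg rowsq_nonneg colsq_nonneg)
    finally show ?thesis .
  qed
  have abs: "(\<lambda>p. norm (?f (fst p) (snd p))) summable_on UNIV"
    by (rule fin_bound(1)) (use fin in auto)
  have sum2: "(\<lambda>(k,l). ?f k l) summable_on (UNIV \<times> UNIV)"
    using abs_summable_summable[of "\<lambda>p. ?f (fst p) (snd p)" UNIV] abs
    by (simp add: case_prod_unfold)
  have "mmul (mmul A B) C i j = (\<Sum>\<^sub>\<infinity>l. \<Sum>\<^sub>\<infinity>k. ?f k l)"
    unfolding mmul_def
    by (rule infsum_cong, rule infsum_cmult_left'[symmetric])
  also have "\<dots> = (\<Sum>\<^sub>\<infinity>k. \<Sum>\<^sub>\<infinity>l. ?f k l)"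
    by (rule infsum_swap_banach[symmetric]) (use sum2 in simp)
  also have "\<dots> = mmul A (mmul B C) i j"
    unfolding mmul_def
    by (rule infsum_cong, subst infsum_cmult_right'[symmetric]) (simp add: mult.assoc)
  finally show "mmul (mmul A B) C i j = mmul A (mmul B C) i j" .
qed

lemma hs_complete:
  assumes hsA: "\<And>n. hs (A n)"
    and C: "\<And>e. e > 0 \<Longrightarrow> \<exists>N. \<forall>n\<ge>N. \<forall>m\<ge>N. hs_norm (\<lambda>i j. A n i j - A m i j) < e"
  shows "\<exists>L. hs L \<and> (\<lambda>n. hs_norm (\<lambda>i j. A n i j - L i j)) \<longlonglongrightarrow> 0"
proof -
  have cy: "Cauchy (\<lambda>n. A n i j)" for i j
  proof (rule metric_CauchyI)
    fix e :: real assume "e > 0"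
    then obtain N where N: "\<forall>n\<ge>N. \<forall>m\<ge>N. hs_norm (\<lambda>i j. A n i j - A m i j) < e" using C by blast
    show "\<exists>M. \<forall>m\<ge>M. \<forall>n\<ge>M. dist (A m i j) (A n i j) < e"
    proof (intro exI allI impI)
      fix m n assume "m \<ge> N" "n \<ge> N"
      then have "cmod (A m i j - A n i j) \<le> hs_norm (\<lambda>i j. A m i j - A n i j)"
        using hs_entry_le[OF hs_diff[OF hsA[of m] hsA[of n]], of i j] by simp
      moreover have "hs_norm (\<lambda>i j. A m i j - A n i j) < e" using N \<open>m\<ge>N\<close> \<open>n\<ge>N\<close> by blast
      ultimately show "dist (A m i j) (A n i j) < e" by (simp add: dist_norm)
    qed
  qed
  define L where "L i j = lim (\<lambda>n. A n i j)" for i j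
  have Lc: "(\<lambda>n. A n i j) \<longlonglongrightarrow> L i j" for i j
    unfolding L_def using cy Cauchy_convergent_iff convergent_LIMSEQ_iff by blast
  have key: "hs (\<lambda>i j. A n i j - L i j) \<and> hs_norm (\<lambda>i j. A n i j - L i j) \<le> e"
    if epos: "e > 0" and NN: "\<forall>n\<ge>N. \<forall>m\<ge>N. hs_norm (\<lambda>i j. A n i j - A m i j) < e" and nN: "n \<ge> N" for e N n
  proof -
    have fin: "(\<Sum>(i,j)\<in>F. (cmod (A n i j - L i j))\<^sup>2) \<le> e\<^sup>2" if F: "finite F" for F
    proof -
      have lim: "(\<lambda>m. \<Sum>(i,j)\<in>F. (cmod (A n i j - A m i j))\<^sup>2) \<longlonglongrightarrow> (\<Sum>(i,j)\<in>F. (cmod (A n i j - L i j))\<^sup>2)"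
        by (auto intro!: tendsto_sum tendsto_intros Lc simp: case_prod_unfold)
      have ev: "\<forall>\<^sub>F m in sequentially. (\<Sum>(i,j)\<in>F. (cmod (A n i j - A m i j))\<^sup>2) \<le> e\<^sup>2"
      proof (rule eventually_sequentiallyI[of N])
        fix m assume "m \<ge> N"
        have "(\<Sum>(i,j)\<in>F. (cmod (A n i j - A m i j))\<^sup>2) \<le> hsq (\<lambda>i j. A n i j - A m i j)"
          using hs_sum_le[OF hs_diff[OF hsA[of n] hsA[of m]] F] by simp
        also have "\<dots> = (hs_norm (\<lambda>i j. A n i j - A m i j))\<^sup>2"
          by (simp add: hs_norm_hsq hsq_nonneg)
        also have "\<dots> \<le> e\<^sup>2" using NN nN \<open>m\<ge>N\<close>
          by (intro power_mono) (auto simp: hs_norm_nonneg less_imp_le)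
        finally show "(\<Sum>(i,j)\<in>F. (cmod (A n i j - A m i j))\<^sup>2) \<le> e\<^sup>2" .
      qed
      show ?thesis by (rule tendsto_le[OF _ tendsto_const lim ev]) simp
    qed
    have "hs (\<lambda>i j. A n i j - L i j)" by (rule hs_boundI(1)) (rule fin)
    moreover have "hsq (\<lambda>i j. A n i j - L i j) \<le> e\<^sup>2" by (rule hs_boundI(2)) (rule fin)
    then have "hs_norm (\<lambda>i j. A n i j - L i j) \<le> e"
      unfolding hs_norm_hsq using \<open>e>0\<close> by (simp add: real_sqrt_le_iff real_le_lsqrt hsq_nonneg)
    ultimately show ?thesis by blast
  qed
  obtain N1 where N1: "\<forall>n\<ge>N1. \<forall>m\<ge>N1. hs_norm (\<lambda>i j. A n i j - A m i j) < 1" using C[of 1] by auto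
  have hsD: "hs (\<lambda>i j. A N1 i j - L i j)" using key[OF _ N1] by auto
  have hsL: "hs L"
    using hs_diff[OF hsA[of N1] hsD] by simp
  show ?thesis
  proof (rule exI[of _ L], rule conjI[OF hsL])
    show "(\<lambda>n. hs_norm (\<lambda>i j. A n i j - L i j)) \<longlonglongrightarrow> 0"
    proof (rule LIMSEQ_I)
      fix r :: real assume "r > 0"
      then obtain N where N: "\<forall>n\<ge>N. \<forall>m\<ge>N. hs_norm (\<lambda>i j. A n i j - A m i j) < r/2" using C[of "r/2"] by auto
      show "\<exists>no. \<forall>n\<ge>no. norm (hs_norm (\<lambda>i j. A n i j - L i j) - 0) < r"
      proof (intro exI allI impI)
        fix n assume "n \<ge> N"
        then have "hs_norm (\<lambda>i j. A n i j - L i j) \<le> r/2" using key[OF _ N] \<open>r>0\<close> by auto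
        then show "norm (hs_norm (\<lambda>i j. A n i j - L i j) - 0) < r" using \<open>r>0\<close> hs_norm_nonneg[of "\<lambda>i j. A n i j - L i j"] by simp
      qed
    qed
  qed
qed


lemmas hs_simps[simp] = hs_add(1) hs_cmult(1) hs_mmul(1) hs_neg hs_diff hs_zero(1)

typedef 'i ua = "{p :: complex \<times> 'i mat. hs (snd p)}" morphisms rep_ua Abs_ua
  by (rule exI[of _ "(0, \<lambda>i j. 0)"]) (simp add: hs_zero)

setup_lifting type_definition_ua

instantiation ua :: (type) "{real_vector, one, times}"
begin
lift_definition zero_ua :: "'i ua" is "(0, \<lambda>i j. 0)" by simp
lift_definition one_ua :: "'i ua" is "(1, \<lambda>i j. 0)" by simp
lift_definition plus_ua :: "'i ua \<Rightarrow> 'i ua \<Rightarrow> 'i ua"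
  is "\<lambda>p q. (fst p + fst q, \<lambda>i j. snd p i j + snd q i j)" by simp
lift_definition uminus_ua :: "'i ua \<Rightarrow> 'i ua"
  is "\<lambda>p. (- fst p, \<lambda>i j. - snd p i j)" by simp
lift_definition minus_ua :: "'i ua \<Rightarrow> 'i ua \<Rightarrow> 'i ua"
  is "\<lambda>p q. (fst p - fst q, \<lambda>i j. snd p i j - snd q i j)" by simp
lift_definition scaleR_ua :: "real \<Rightarrow> 'i ua \<Rightarrow> 'i ua"
  is "\<lambda>r p. (complex_of_real r * fst p, \<lambda>i j. complex_of_real r * snd p i j)" by simp
lift_definition times_ua :: "'i ua \<Rightarrow> 'i ua \<Rightarrow> 'i ua"
  is "\<lambda>p q. (fst p * fst q, \<lambda>i j. fst p * snd q i j + fst q * snd p i j + mmul (snd p) (snd q) i j)"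
  by simp
instance
  by intro_classes (transfer; auto simp: algebra_simps)+
end


lemma rep_ua_hs[simp]: "hs (snd (rep_ua x))"
  using rep_ua by auto

lemmas mm_rules = mmul_add_left mmul_add_right mmul_cmult_left mmul_cmult_right mmul_assoc

lemma mmul_zero_left[simp]: "mmul (\<lambda>i j. 0) B = (\<lambda>i j. 0)"
  by (simp add: mmul_def)
lemma mmul_zero_right[simp]: "mmul A (\<lambda>i j. 0) = (\<lambda>i j. 0)"
  by (simp add: mmul_def)

lemma ua_mult_assoc: "(a * b) * c = a * (b * (c::'i ua))"
proof (transfer)
  fix a b c :: "complex \<times> 'i mat"
  assume h: "hs (snd a)" "hs (snd b)" "hs (snd c)"
  obtain x A where a: "a = (x, A)" by (cases a)
  obtain y B where b: "b = (y, B)" by (cases b)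
  obtain z C where c: "c = (z, C)" by (cases c)
  from h have hA: "hs A" and hB: "hs B" and hC: "hs C" by (auto simp: a b c)
  have e1: "mmul (\<lambda>i j. x * B i j + y * A i j + mmul A B i j) C
      = (\<lambda>i j. x * mmul B C i j + y * mmul A C i j + mmul A (mmul B C) i j)"
    using hA hB hC by (simp add: mm_rules)
  have e2: "mmul A (\<lambda>i j. y * C i j + z * B i j + mmul B C i j)
      = (\<lambda>i j. y * mmul A C i j + z * mmul A B i j + mmul A (mmul B C) i j)"
    using hA hB hC by (simp add: mm_rules)
  show "(fst (fst a * fst b,
           \<lambda>i j. fst a * snd b i j + fst b * snd a i j + mmul (snd a) (snd b) i j) * fst c,
        \<lambda>i j. fst (fst a * fst b, \<lambda>i j. fst a * snd b i j + fst b * snd a i j + mmul (snd a) (snd b) i j) * snd c i j +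
              fst c * snd (fst a * fst b, \<lambda>i j. fst a * snd b i j + fst b * snd a i j + mmul (snd a) (snd b) i j) i j +
              mmul (snd (fst a * fst b, \<lambda>i j. fst a * snd b i j + fst b * snd a i j + mmul (snd a) (snd b) i j)) (snd c) i j) =
       (fst a * fst (fst b * fst c, \<lambda>i j. fst b * snd c i j + fst c * snd b i j + mmul (snd b) (snd c) i j),
        \<lambda>i j. fst a * snd (fst b * fst c, \<lambda>i j. fst b * snd c i j + fst c * snd b i j + mmul (snd b) (snd c) i j) i j +
              fst (fst b * fst c, \<lambda>i j. fst b * snd c i j + fst c * snd b i j + mmul (snd b) (snd c) i j) * snd a i j +
              mmul (snd a) (snd (fst b * fst c, \<lambda>i j. fst b * snd c i j + fst c * snd b i j + mmul (snd b) (snd c) i j)) i j)"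
    unfolding a b c using e1 e2 by (simp add: algebra_simps fun_eq_iff)
qed


lemma ua_distrib_left: "a * (b + c) = a * b + a * (c::'i ua)"
  apply transfer
  apply (clarsimp simp: algebra_simps mmul_add_right fun_eq_iff)
  done

lemma ua_distrib_right: "(a + b) * c = a * c + b * (c::'i ua)"
  apply transfer
  apply (clarsimp simp: algebra_simps mmul_add_left fun_eq_iff)
  done

lemma ua_one_left: "1 * a = (a::'i ua)"
  by transfer (auto simp: fun_eq_iff)
lemma ua_one_right: "a * 1 = (a::'i ua)"
  by transfer (auto simp: fun_eq_iff)
lemma ua_zero_neq_one: "(0::'i ua) \<noteq> 1"
  by transfer simp

lemma ua_scaleR_left: "scaleR r a * b = scaleR r (a * (b::'i ua))"
  apply transfer
  apply (clarsimp simp: algebra_simps mmul_cmult_left fun_eq_iff)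
  done
lemma ua_scaleR_right: "a * scaleR r b = scaleR r (a * (b::'i ua))"
  apply transfer
  apply (clarsimp simp: algebra_simps mmul_cmult_right fun_eq_iff)
  done

instance ua :: (type) real_algebra_1
  by intro_classes (simp_all add: ua_mult_assoc ua_distrib_left ua_distrib_right ua_one_left
      ua_one_right ua_zero_neq_one ua_scaleR_left ua_scaleR_right)


instantiation ua :: (type) norm
begin
lift_definition norm_ua :: "'i ua \<Rightarrow> real" is "\<lambda>p. cmod (fst p) + hs_norm (snd p)" .
instance ..
end

instantiation ua :: (type) real_normed_algebra_1
begin
definition sgn_ua_def: "sgn (x::'a ua) = x /\<^sub>R norm x"
definition dist_ua_def: "dist (x::'a ua) y = norm (x - y)"
definition uniformity_ua_def [code del]:
  "(uniformity :: ('a ua \<times> 'a ua) filter) = (INF e\<in>{0 <..}. principal {(x, y). dist x y < e})"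
definition open_ua_def [code del]:
  "open (U :: 'a ua set) \<longleftrightarrow> (\<forall>x\<in>U. eventually (\<lambda>(x', y). x' = x \<longrightarrow> y \<in> U) uniformity)"
instance
proof
  fix r :: real and x y :: "'a ua"
  show "(norm x = 0) = (x = 0)"
    apply transfer
    apply (auto simp: hs_norm_nonneg prod_eq_iff add_nonneg_eq_0_iff hs_zero)
    apply (metis hs_norm_eq0)
    done
  show "norm (x + y) \<le> norm x + norm y"
    apply transfer
    subgoal for p q using hs_add(2)[of "snd p" "snd q"] norm_triangle_ineq[of "fst p" "fst q"] by simp
    done
  show "norm (scaleR r x) = \<bar>r\<bar> * norm x"
    apply transfer
    apply (clarsimp simp: hs_cmult norm_mult algebra_simps)
    done
  show "norm (x * y) \<le> norm x * norm y"
    apply transfer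
    subgoal for p q
    proof -
      assume h: "hs (snd p)" "hs (snd q)"
      have "hs_norm (\<lambda>i j. fst p * snd q i j + fst q * snd p i j + mmul (snd p) (snd q) i j)
          \<le> hs_norm (\<lambda>i j. fst p * snd q i j + fst q * snd p i j) + hs_norm (mmul (snd p) (snd q))"
        using h by (intro hs_add(2)) auto
      also have "\<dots> \<le> cmod (fst p) * hs_norm (snd q) + cmod (fst q) * hs_norm (snd p) + hs_norm (snd p) * hs_norm (snd q)"
        using h hs_add(2)[of "\<lambda>i j. fst p * snd q i j" "\<lambda>i j. fst q * snd p i j"] hs_mmul(2)[OF h]
        by (simp add: hs_cmult)
      finally show ?thesis
        by (simp add: norm_mult algebra_simps)
    qed
    done
  show "norm (1::'a ua) = 1" by transfer (simp add: hs_zero)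
qed (rule sgn_ua_def dist_ua_def open_ua_def uniformity_ua_def)+
end


lemma norm_ua_rep: "norm x = cmod (fst (rep_ua x)) + hs_norm (snd (rep_ua x))"
  by (simp add: norm_ua.rep_eq)

lemma hs_norm_le_norm_ua: "hs_norm (snd (rep_ua x)) \<le> norm x"
  by (simp add: norm_ua_rep)
lemma cmod_le_norm_ua: "cmod (fst (rep_ua x)) \<le> norm x"
  by (simp add: norm_ua_rep hs_norm_nonneg)

instance ua :: (type) banach
proof
  fix X :: "nat \<Rightarrow> 'a ua"
  assume C: "Cauchy X"
  define c where "c n = fst (rep_ua (X n))" for n
  define A where "A n = snd (rep_ua (X n))" for n
  have hA: "hs (A n)" for n by (simp add: A_def)
  have diff: "rep_ua (X n - X m) = (c n - c m, \<lambda>i j. A n i j - A m i j)" for n m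
    by (simp add: minus_ua.rep_eq c_def A_def)
  have Cc: "Cauchy c"
  proof (rule metric_CauchyI)
    fix e :: real assume "e > 0"
    then obtain N where N: "\<forall>m\<ge>N. \<forall>n\<ge>N. dist (X m) (X n) < e" using C metric_CauchyD by blast
    show "\<exists>M. \<forall>m\<ge>M. \<forall>n\<ge>M. dist (c m) (c n) < e"
    proof (intro exI allI impI)
      fix m n assume "m \<ge> N" "n \<ge> N"
      then have "dist (X m) (X n) < e" using N by blast
      moreover have "dist (c m) (c n) \<le> dist (X m) (X n)"
        using cmod_le_norm_ua[of "X m - X n"] by (simp add: dist_norm diff)
      ultimately show "dist (c m) (c n) < e" by simp
    qed
  qed
  then obtain c0 where c0: "c \<longlonglongrightarrow> c0" using Cauchy_convergent_iff convergent_def by blast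
  have CA: "\<exists>N. \<forall>n\<ge>N. \<forall>m\<ge>N. hs_norm (\<lambda>i j. A n i j - A m i j) < e" if "e > 0" for e
  proof -
    obtain N where N: "\<forall>m\<ge>N. \<forall>n\<ge>N. dist (X m) (X n) < e" using C metric_CauchyD \<open>e>0\<close> by blast
    show ?thesis
    proof (intro exI allI impI)
      fix n m assume "n \<ge> N" "m \<ge> N"
      then have "dist (X n) (X m) < e" using N by blast
      moreover have "hs_norm (\<lambda>i j. A n i j - A m i j) \<le> dist (X n) (X m)"
        using hs_norm_le_norm_ua[of "X n - X m"] by (simp add: dist_norm diff)
      ultimately show "hs_norm (\<lambda>i j. A n i j - A m i j) < e" by simp
    qed
  qed
  obtain L where hL: "hs L" and L: "(\<lambda>n. hs_norm (\<lambda>i j. A n i j - L i j)) \<longlonglongrightarrow> 0"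
    using hs_complete[OF hA CA] by blast
  define Y where "Y = Abs_ua (c0, L)"
  have rY: "rep_ua Y = (c0, L)" unfolding Y_def by (rule Abs_ua_inverse) (simp add: hL)
  have "(\<lambda>n. norm (X n - Y)) = (\<lambda>n. cmod (c n - c0) + hs_norm (\<lambda>i j. A n i j - L i j))"
    by (simp add: norm_ua_rep minus_ua.rep_eq rY c_def A_def)
  moreover have "(\<lambda>n. cmod (c n - c0) + hs_norm (\<lambda>i j. A n i j - L i j)) \<longlonglongrightarrow> 0"
    using tendsto_add[OF tendsto_norm_zero[OF LIM_zero[OF c0]] L] by simp
  ultimately have "(\<lambda>n. norm (X n - Y)) \<longlonglongrightarrow> 0" by simp
  then have "X \<longlonglongrightarrow> Y" using tendsto_norm_zero_iff LIM_zero_iff by blast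
  then show "convergent X" unfolding convergent_def by blast
qed


definition mat_of :: "'i ua \<Rightarrow> 'i mat" where
  "mat_of x = (\<lambda>i j. fst (rep_ua x) * mid i j + snd (rep_ua x) i j)"

definition lift :: "'i mat \<Rightarrow> 'i ua" where
  "lift g = Abs_ua (1, msub g mid)"

definition hsl :: "'i mat \<Rightarrow> 'i ua" where
  "hsl D = Abs_ua (0, D)"

lemma rep_lift: "hs (msub g mid) \<Longrightarrow> rep_ua (lift g) = (1, msub g mid)"
  unfolding lift_def by (rule Abs_ua_inverse) simp

lemma rep_hsl: "hs D \<Longrightarrow> rep_ua (hsl D) = (0, D)"
  unfolding hsl_def by (rule Abs_ua_inverse) simp

lemma mat_of_lift: "hs (msub g mid) \<Longrightarrow> mat_of (lift g) = g"
  by (simp add: mat_of_def rep_lift msub_def mid_def fun_eq_iff)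

lemma mat_of_hsl: "hs D \<Longrightarrow> mat_of (hsl D) = D"
  by (simp add: mat_of_def rep_hsl)

lemma norm_hsl: "hs D \<Longrightarrow> norm (hsl D) = hs_norm D"
  by (simp add: norm_ua_rep rep_hsl)

lemma ua_eqI: "fst (rep_ua x) = fst (rep_ua y) \<Longrightarrow> mat_of x = mat_of y \<Longrightarrow> x = y"
  by (metis (no_types, lifting) add_left_cancel mat_of_def prod.collapse rep_ua_inject ext)

lemma infsum_mid_left: "infsum (\<lambda>k. mid i k * f k) UNIV = f i"
proof -
  have "infsum (\<lambda>k. mid i k * f k) UNIV = infsum (\<lambda>k. mid i k * f k) {i}"
    by (rule infsum_cong_neutral) (auto simp: mid_def)
  then show ?thesis by (simp add: mid_def)
qed

lemma infsum_mid_right: "infsum (\<lambda>k. f k * mid k j) UNIV = f j"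
proof -
  have "infsum (\<lambda>k. f k * mid k j) UNIV = infsum (\<lambda>k. f k * mid k j) {j}"
    by (rule infsum_cong_neutral) (auto simp: mid_def)
  then show ?thesis by (simp add: mid_def)
qed

lemma summable_mid_left: "(\<lambda>k. mid i k * f k) summable_on UNIV"
  by (rule finite_nonzero_values_imp_summable_on) (rule finite_subset[of _ "{i}"], auto simp: mid_def)
lemma summable_mid_right: "(\<lambda>k. f k * mid k j) summable_on UNIV"
  by (rule finite_nonzero_values_imp_summable_on) (rule finite_subset[of _ "{j}"], auto simp: mid_def)

lemma mat_of_mult: "mat_of (x * y) = mmul (mat_of x) (mat_of y)"
proof -
  obtain c A where x: "rep_ua x = (c, A)" by (cases "rep_ua x")
  obtain d B where y: "rep_ua y = (d, B)" by (cases "rep_ua y")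
  have hA: "hs A" and hB: "hs B" using rep_ua_hs[of x] rep_ua_hs[of y] by (simp_all add: x y)
  show ?thesis
  proof (intro ext)
    fix i j
    have e: "(\<lambda>k. (c * mid i k + A i k) * (d * mid k j + B k j))
      = (\<lambda>k. (mid i k * (c * (d * mid k j + B k j)) + (d * A i k) * mid k j) + A i k * B k j)"
      by (auto simp: fun_eq_iff algebra_simps)
    have "mmul (mat_of x) (mat_of y) i j
        = infsum (\<lambda>k. (mid i k * (c * (d * mid k j + B k j)) + (d * A i k) * mid k j) + A i k * B k j) UNIV"
      by (simp add: mmul_def mat_of_def x y e)
    also have "\<dots> = (c * (d * mid i j + B i j) + d * A i j) + mmul A B i j"
      unfolding mmul_def
      by (subst infsum_add, auto intro!: summable_on_add summable_mid_left summable_mid_right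
            mm_summable hA hB simp: infsum_add summable_mid_left summable_mid_right infsum_mid_left infsum_mid_right)
    also have "\<dots> = mat_of (x * y) i j"
      by (simp add: mat_of_def times_ua.rep_eq x y algebra_simps)
    finally show "mat_of (x * y) i j = mmul (mat_of x) (mat_of y) i j" by simp
  qed
qed


lemma mat_of_one: "mat_of (1::'i ua) = mid"
  by (simp add: mat_of_def one_ua.rep_eq)

lemma fst_rep_mult: "fst (rep_ua (x * y)) = fst (rep_ua x) * fst (rep_ua y)"
  by (simp add: times_ua.rep_eq)

lemma lift_mult_one:
  assumes "hs (msub g mid)" "hs (msub h mid)" "mmul g h = mid"
  shows "lift g * lift h = 1"
  by (rule ua_eqI) (simp_all add: fst_rep_mult rep_lift assms mat_of_mult mat_of_lift mat_of_one one_ua.rep_eq)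

lemma lift_inj: "hs (msub g mid) \<Longrightarrow> hs (msub h mid) \<Longrightarrow> lift g = lift h \<Longrightarrow> g = h"
proof -
  assume a: "hs (msub g mid)" "hs (msub h mid)" "lift g = lift h"
  have "g = mat_of (lift g)" using a(1) by (simp add: mat_of_lift)
  also have "\<dots> = mat_of (lift h)" using a(3) by simp
  also have "\<dots> = h" using a(2) by (simp add: mat_of_lift)
  finally show ?thesis .
qed

lemma GL2_minv:
  assumes "g \<in> GL2"
  shows "hs (msub g mid)" "hs (msub (minv g) mid)" "mmul g (minv g) = mid" "mmul (minv g) g = mid"
    "lift g * lift (minv g) = 1" "lift (minv g) * lift g = 1"
proof -
  obtain h where h: "hs (msub g mid)" "hs (msub h mid)" "mmul g h = mid" "mmul h g = mid"
    using assms unfolding GL2_def by blast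
  have uniq: "h' = h" if h': "hs (msub h' mid) \<and> mmul g h' = mid \<and> mmul h' g = mid" for h'
  proof -
    have one: "lift h' * lift g = 1" using lift_mult_one[of h' g] h' h(1) by blast
    have "lift h' = lift h' * (lift g * lift h)" using lift_mult_one[OF h(1,2,3)] by simp
    also have "\<dots> = (lift h' * lift g) * lift h" by (simp add: mult.assoc)
    also have "\<dots> = lift h" by (simp add: one)
    finally have "lift h' = lift h" .
    then show ?thesis using lift_inj h h' by blast
  qed
  have m: "minv g = h" unfolding minv_def
  proof (rule the_equality)
    show "hs (msub h mid) \<and> mmul g h = mid \<and> mmul h g = mid" using h by blast
  qed (rule uniq)
  show "hs (msub g mid)" "hs (msub (minv g) mid)" "mmul g (minv g) = mid" "mmul (minv g) g = mid"
    using h unfolding m by auto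
  show "lift g * lift (minv g) = 1" "lift (minv g) * lift g = 1"
    using lift_mult_one[OF h(1) h(2) h(3)] lift_mult_one[OF h(2) h(1) h(4)] unfolding m by auto
qed

lemma norm_lift_ge1: "hs (msub g mid) \<Longrightarrow> norm (lift g) \<ge> 1"
  by (simp add: norm_ua_rep rep_lift hs_norm_nonneg)

lemma lift_diff: "hs (msub g mid) \<Longrightarrow> hs (msub h mid) \<Longrightarrow>
    rep_ua (lift g - lift h) = (0, msub g h)"
  by (simp add: minus_ua.rep_eq rep_lift msub_def fun_eq_iff)

lemma norm_lift_diff: "hs (msub g mid) \<Longrightarrow> hs (msub h mid) \<Longrightarrow>
    norm (lift g - lift h) = hs_norm (msub g h)"
  by (simp add: norm_ua_rep lift_diff)

lemma has_vector_derivative_norm_iff: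
  "(f has_vector_derivative D) (at t within S) \<longleftrightarrow>
   ((\<lambda>s. norm ((f s - f t) /\<^sub>R (s - t) - D)) \<longlongrightarrow> 0) (at t within S)"
proof -
  have bl: "bounded_linear (\<lambda>h. h *\<^sub>R D)" by (rule bounded_linear_scaleR_left)
  have eq: "\<forall>\<^sub>F s in at t within S. norm ((1 / norm (s - t)) *\<^sub>R (f s - (f t + (s - t) *\<^sub>R D)))
        = norm ((f s - f t) /\<^sub>R (s - t) - D)"
  proof -
    have "norm ((1 / norm (s - t)) *\<^sub>R (f s - (f t + (s - t) *\<^sub>R D)))
        = norm ((f s - f t) /\<^sub>R (s - t) - D)" if "s \<noteq> t" for s
    proof -
      have "(f s - f t) /\<^sub>R (s - t) - D = (1 / (s - t)) *\<^sub>R (f s - (f t + (s - t) *\<^sub>R D))"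
      proof -
        have a: "(1 / (s - t)) *\<^sub>R (f s - (f t + (s - t) *\<^sub>R D))
           = (1 / (s - t)) *\<^sub>R (f s - f t) - (1 / (s - t)) *\<^sub>R ((s - t) *\<^sub>R D)"
          by (simp only: diff_diff_eq[symmetric] scaleR_diff_right)
        have b: "(1 / (s - t)) *\<^sub>R ((s - t) *\<^sub>R D) = D" using that by simp
        show ?thesis unfolding a b by (simp add: divide_inverse)
      qed
      then show ?thesis by simp
    qed
    then show ?thesis by (auto simp: eventually_at_filter)
  qed
  show ?thesis
  proof -
    have "((\<lambda>s. (1 / norm (s - t)) *\<^sub>R (f s - (f t + (s - t) *\<^sub>R D))) \<longlongrightarrow> 0) (at t within S)
      \<longleftrightarrow> ((\<lambda>s. norm ((1 / norm (s - t)) *\<^sub>R (f s - (f t + (s - t) *\<^sub>R D)))) \<longlongrightarrow> 0) (at t within S)"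
      by (rule tendsto_norm_zero_iff[symmetric])
    also have "\<dots> \<longleftrightarrow> ((\<lambda>s. norm ((f s - f t) /\<^sub>R (s - t) - D)) \<longlongrightarrow> 0) (at t within S)"
      by (rule tendsto_cong[OF eq])
    finally show ?thesis
      unfolding has_vector_derivative_def has_derivative_within using bl by simp
  qed
qed


lemma rep_hsl_diff: "hs A \<Longrightarrow> hs B \<Longrightarrow> rep_ua (hsl A - hsl B) = (0, msub A B)"
  by (simp add: minus_ua.rep_eq rep_hsl msub_def)

lemma norm_hsl_diff: "hs A \<Longrightarrow> hs B \<Longrightarrow> norm (hsl A - hsl B) = hs_norm (msub A B)"
  by (simp add: norm_ua_rep rep_hsl_diff)

lemma tendsto_norm_iff: "(f \<longlongrightarrow> l) F \<longleftrightarrow> ((\<lambda>x. norm (f x - l)) \<longlongrightarrow> 0) F"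
  by (simp add: tendsto_norm_zero_iff LIM_zero_iff)

lemma bridge_deriv:
  assumes "\<forall>s\<in>S. hs (msub (\<alpha> s) mid)" "t \<in> S" "hs D"
  shows "hs_deriv_within \<alpha> D t S \<longleftrightarrow> ((\<lambda>s. lift (\<alpha> s)) has_vector_derivative hsl D) (at t within S)"
proof -
  have pt: "norm ((lift (\<alpha> s) - lift (\<alpha> t)) /\<^sub>R (s - t) - hsl D)
      = hs_norm (\<lambda>i j. (\<alpha> s i j - \<alpha> t i j) / complex_of_real (s - t) - D i j)" if s: "s \<in> S" for s
  proof -
    have hs1: "hs (msub (\<alpha> s) mid)" "hs (msub (\<alpha> t) mid)" using assms s by auto
    have "rep_ua ((lift (\<alpha> s) - lift (\<alpha> t)) /\<^sub>R (s - t) - hsl D)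
        = (0, \<lambda>i j. (\<alpha> s i j - \<alpha> t i j) / complex_of_real (s - t) - D i j)"
      by (simp add: minus_ua.rep_eq scaleR_ua.rep_eq rep_lift[OF hs1(1)] rep_lift[OF hs1(2)] rep_hsl[OF assms(3)]
          msub_def divide_inverse mult.commute of_real_inverse)
    then show ?thesis by (simp add: norm_ua_rep)
  qed
  have ev: "\<forall>\<^sub>F s in at t within S. norm ((lift (\<alpha> s) - lift (\<alpha> t)) /\<^sub>R (s - t) - hsl D)
      = hs_norm (\<lambda>i j. (\<alpha> s i j - \<alpha> t i j) / complex_of_real (s - t) - D i j)"
    using pt by (auto simp: eventually_at_filter)
  show ?thesis
    unfolding hs_deriv_within_def has_vector_derivative_norm_iff
    using tendsto_cong[OF ev] assms(3) by simp
qed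

lemma bridge_cont:
  assumes "\<forall>s\<in>S. hs (D s)"
  shows "hs_cont_on S D \<longleftrightarrow> continuous_on S (\<lambda>s. hsl (D s))"
proof -
  have "((\<lambda>s. hs_norm (msub (D s) (D t))) \<longlongrightarrow> 0) (at t within S)
     \<longleftrightarrow> ((\<lambda>s. hsl (D s)) \<longlongrightarrow> hsl (D t)) (at t within S)" if t: "t \<in> S" for t
  proof -
    have ev: "\<forall>\<^sub>F s in at t within S. norm (hsl (D s) - hsl (D t)) = hs_norm (msub (D s) (D t))"
      using assms t by (auto simp: eventually_at_filter norm_hsl_diff)
    show ?thesis unfolding tendsto_norm_iff[of "\<lambda>s. hsl (D s)"] using tendsto_cong[OF ev] by simp
  qed
  then show ?thesis unfolding hs_cont_on_def continuous_on_def by blast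
qed


definition cons :: "real set \<Rightarrow> real \<Rightarrow> real \<Rightarrow> bool" where
  "cons T c d \<longleftrightarrow> c \<in> T \<and> d \<in> T \<and> c < d \<and> {c<..<d} \<inter> T = {}"

lemma piece_right:
  assumes "finite T" "0 \<in> T" "1 \<in> T" "0 \<le> x" "x < 1"
  shows "\<exists>c d. cons T c d \<and> c \<le> x \<and> x < d"
proof -
  define c where "c = Max {s\<in>T. s \<le> x}"
  define d where "d = Min {s\<in>T. x < s}"
  have f1: "finite {s\<in>T. s \<le> x}" "{s\<in>T. s \<le> x} \<noteq> {}" using assms by auto
  have f2: "finite {s\<in>T. x < s}" "{s\<in>T. x < s} \<noteq> {}" using assms by auto
  have c: "c \<in> T" "c \<le> x" using Max_in[OF f1] unfolding c_def by auto
  have d: "d \<in> T" "x < d" using Min_in[OF f2] unfolding d_def by auto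
  have "{c<..<d} \<inter> T = {}"
  proof (rule ccontr)
    assume "{c<..<d} \<inter> T \<noteq> {}"
    then obtain s where s: "s \<in> T" "c < s" "s < d" by auto
    show False
    proof (cases "s \<le> x")
      case True then have "s \<le> c" unfolding c_def using f1 s by (intro Max_ge) auto
      then show False using s by simp
    next
      case False then have "d \<le> s" unfolding d_def using f2 s by (intro Min_le) auto
      then show False using s by simp
    qed
  qed
  then have "cons T c d" using c d by (auto simp: cons_def)
  then show ?thesis using c d by blast
qed

lemma pieces_induct:
  assumes "finite T" "0 \<in> T" "T \<subseteq> {0..}" "P 0"
    and step: "\<And>p c. cons T p c \<Longrightarrow> P p \<Longrightarrow> P c"
  shows "c \<in> T \<Longrightarrow> P c"
proof (induction "card {s\<in>T. s < c}" arbitrary: c rule: less_induct)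
  case (less c)
  show ?case
  proof (cases "c = 0")
    case True then show ?thesis using assms by simp
  next
    case False
    then have cpos: "0 < c" using less.prems assms(3) by force
    define p where "p = Max {s\<in>T. s < c}"
    have f: "finite {s\<in>T. s < c}" "{s\<in>T. s < c} \<noteq> {}" using assms cpos by auto
    have p: "p \<in> T" "p < c" using Max_in[OF f] unfolding p_def by auto
    have cs: "cons T p c"
    proof -
      have "{p<..<c} \<inter> T = {}"
      proof (rule ccontr)
        assume "{p<..<c} \<inter> T \<noteq> {}"
        then obtain s where s: "s \<in> T" "p < s" "s < c" by auto
        then have "s \<le> p" unfolding p_def using f by (intro Max_ge) auto
        then show False using s by simp
      qed
      then show ?thesis using p less.prems by (auto simp: cons_def)
    qed
    have "card {s\<in>T. s < p} < card {s\<in>T. s < c}"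
      by (rule psubset_card_mono) (use f p in auto)
    then have "P p" using less.hyps p by blast
    then show ?thesis by (rule step[OF cs])
  qed
qed

lemma glue_cont:
  fixes f :: "real \<Rightarrow> 'a::topological_space"
  assumes "finite T" "{0,1} \<subseteq> T" "T \<subseteq> {0..1}"
    and "\<And>c d. cons T c d \<Longrightarrow> continuous_on {c..d} f"
  shows "continuous_on {0..1} f"
proof -
  have "continuous_on {0..c} f" if "c \<in> T" for c
  proof (rule pieces_induct[where P="\<lambda>c. continuous_on {0..c} f", OF _ _ _ _ _ that])
    show "continuous_on {0..0} f" by simp
    fix p c assume cs: "cons T p c" and P: "continuous_on {0..p} f"
    have "p \<ge> 0" using cs assms(3) by (auto simp: cons_def)
    then have "{0..c} = {0..p} \<union> {p..c}" using cs by (auto simp: cons_def)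
    then show "continuous_on {0..c} f"
      using continuous_on_closed_Un[OF _ _ P assms(4)[OF cs]] by simp
  qed (use assms in auto)
  then show ?thesis using assms(2) by auto
qed

lemma glue_integrable:
  fixes f :: "real \<Rightarrow> 'a::banach"
  assumes "finite T" "{0,1} \<subseteq> T" "T \<subseteq> {0..1}"
    and "\<And>c d. cons T c d \<Longrightarrow> f integrable_on {c..d}"
  shows "f integrable_on {0..1}"
proof -
  have "f integrable_on {0..c}" if "c \<in> T" for c
  proof (rule pieces_induct[where P="\<lambda>c. f integrable_on {0..c}", OF _ _ _ _ _ that])
    show "f integrable_on {0..0}" using integrable_on_refl[of f 0] by simp
    fix p c assume cs: "cons T p c" and P: "f integrable_on {0..p}"
    have "p \<ge> 0" using cs assms(3) by (auto simp: cons_def)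
    then show "f integrable_on {0..c}"
      using Henstock_Kurzweil_Integration.integrable_combine[OF _ _ P assms(4)[OF cs]] cs by (auto simp: cons_def)
  qed (use assms in auto)
  then show ?thesis using assms(2) by auto
qed


lemma inverse_continuous:
  fixes a b :: "real \<Rightarrow> 'a::real_normed_algebra_1"
  assumes ca: "continuous_on S a"
    and inv: "\<And>s. s \<in> S \<Longrightarrow> a s * b s = 1 \<and> b s * a s = 1"
  shows "continuous_on S b"
  unfolding continuous_on_def
proof (intro ballI)
  fix t assume t: "t \<in> S"
  have at: "(a \<longlongrightarrow> a t) (at t within S)" using ca t by (simp add: continuous_on_def)
  then have an: "((\<lambda>s. norm (a s - a t)) \<longlongrightarrow> 0) (at t within S)"
    using tendsto_norm_iff by blast
  define B where "B = norm (b t)"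
  have Bpos: "B > 0"
  proof -
    have "b t \<noteq> 0" using inv[OF t] by auto
    then show ?thesis by (simp add: B_def)
  qed
  have ev: "\<forall>\<^sub>F s in at t within S. norm (a s - a t) * B < 1/2"
  proof -
    have "\<forall>\<^sub>F s in at t within S. norm (a s - a t) < 1 / (2 * B)"
      using an Bpos by (auto simp: tendsto_iff dist_norm)
    then show ?thesis by eventually_elim (use Bpos in \<open>simp add: field_simps\<close>)
  qed
  have bound: "norm (b s - b t) \<le> 2 * B * B * norm (a s - a t)"
    if s: "s \<in> S" and sm: "norm (a s - a t) * B < 1/2" for s
  proof -
    have "b s * (a t - a s) * b t = b s * (a t * b t) - (b s * a s) * b t"
      by (simp add: right_diff_distrib left_diff_distrib mult.assoc)
    also have "\<dots> = b s - b t" using inv[OF s] inv[OF t] by simp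
    finally have id: "b s - b t = b s * (a t - a s) * b t" by simp
    have n1: "norm (b s - b t) \<le> norm (b s) * norm (a s - a t) * B"
    proof -
      have "norm (b s - b t) \<le> norm (b s) * norm (a t - a s) * norm (b t)"
        unfolding id
        by (rule order_trans[OF norm_mult_ineq], rule mult_right_mono[OF norm_mult_ineq]) simp
      then show ?thesis by (simp add: B_def norm_minus_commute)
    qed
    have "norm (b s) \<le> norm (b t) + norm (b s - b t)" by (metis norm_triangle_sub add.commute)
    also have "\<dots> \<le> B + norm (b s) * (norm (a s - a t) * B)" using n1 by (simp add: B_def mult.assoc)
    also have "\<dots> \<le> B + norm (b s) * (1/2)"
      using sm by (intro add_left_mono mult_left_mono) auto
    finally have nb: "norm (b s) \<le> 2 * B" by simp
    have "norm (b s - b t) \<le> norm (b s) * (norm (a s - a t) * B)" using n1 by (simp add: mult.assoc)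
    also have "\<dots> \<le> (2 * B) * (norm (a s - a t) * B)"
      using nb Bpos by (intro mult_right_mono) auto
    finally show ?thesis by (simp add: algebra_simps)
  qed
  have "((\<lambda>s. b s - b t) \<longlongrightarrow> 0) (at t within S)"
  proof (rule Lim_null_comparison)
    show "\<forall>\<^sub>F s in at t within S. norm (b s - b t) \<le> 2 * B * B * norm (a s - a t)"
      using ev bound by (auto simp: eventually_at_filter elim: eventually_mono)
    show "((\<lambda>s. 2 * B * B * norm (a s - a t)) \<longlongrightarrow> 0) (at t within S)"
      using tendsto_mult_right_zero[OF an] by simp
  qed
  then show "(b \<longlongrightarrow> b t) (at t within S)" by (simp add: LIM_zero_iff)
qed

lemma norm_scalar0: "fst (rep_ua x) = 0 \<Longrightarrow> norm x = hs_norm (mat_of x)"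
  by (simp add: norm_ua_rep mat_of_def)

lemma ell_eq:
  assumes "g \<in> GL2" "hs V"
  shows "hs_norm (mmul (minv g) V) = norm (lift (minv g) * hsl V)"
proof -
  have h: "hs (msub (minv g) mid)" using GL2_minv[OF assms(1)] by blast
  have "fst (rep_ua (lift (minv g) * hsl V)) = 0"
    by (simp add: fst_rep_mult rep_hsl[OF assms(2)])
  then show ?thesis
    by (simp add: norm_scalar0 mat_of_mult mat_of_lift[OF h] mat_of_hsl[OF assms(2)])
qed


lemma hsl_inj: "hs A \<Longrightarrow> hs B \<Longrightarrow> hsl A = hsl B \<Longrightarrow> A = B"
  by (metis mat_of_hsl)

lemma curve_facts:
  fixes \<alpha> :: "real \<Rightarrow> 'i mat"
  assumes inG: "\<forall>t\<in>{0..1}. \<alpha> t \<in> GL2" and pw: "hs_pw_smooth \<alpha>"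
  obtains T where "finite T" "{0,1} \<subseteq> T" "T \<subseteq> {0..1}"
    "continuous_on {0..1} (\<lambda>t. lift (\<alpha> t))"
    "continuous_on {0..1} (\<lambda>t. lift (minv (\<alpha> t)))"
    "\<And>s. s \<in> {0<..<1} - T \<Longrightarrow> hs (hs_vel \<alpha> s) \<and>
        ((\<lambda>t. lift (\<alpha> t)) has_vector_derivative hsl (hs_vel \<alpha> s)) (at s)"
    "(\<lambda>t. hs_norm (mmul (minv (\<alpha> t)) (hs_vel \<alpha> t))) integrable_on {0..1}"
proof -
  obtain T where T: "finite T" "{0,1} \<subseteq> T" "T \<subseteq> {0..1}"
    and H: "\<forall>a\<in>T. \<forall>b\<in>T. a < b \<and> {a<..<b} \<inter> T = {} \<longrightarrow>
        (\<exists>D. (\<forall>t\<in>{a..b}. hs_deriv_within \<alpha> (D t) t {a..b}) \<and> hs_cont_on {a..b} D)"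
    using pw unfolding hs_pw_smooth_def by blast
  have pc: "\<exists>D. (\<forall>t\<in>{c..d}. hs_deriv_within \<alpha> (D t) t {c..d}) \<and> hs_cont_on {c..d} D"
    if cs: "cons T c d" for c d
    by (rule H[rule_format]) (use cs in \<open>auto simp: cons_def\<close>)
  define a where "a t = lift (\<alpha> t)" for t
  define b where "b t = lift (minv (\<alpha> t))" for t
  have hsG: "hs (msub (\<alpha> t) mid)" if "t \<in> {0..1}" for t using inG that GL2_minv(1) by blast
  have ab: "a t * b t = 1 \<and> b t * a t = 1" if "t \<in> {0..1}" for t
    using GL2_minv(5,6)[of "\<alpha> t"] inG that by (simp add: a_def b_def)
  have sub: "{c..d} \<subseteq> {0..1}" if "cons T c d" for c d using that T by (auto simp: cons_def)
  have piece: "\<exists>D. (\<forall>t\<in>{c..d}. hs (D t) \<and> (a has_vector_derivative hsl (D t)) (at t within {c..d}))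
        \<and> continuous_on {c..d} (\<lambda>t. hsl (D t))" if cs: "cons T c d" for c d
  proof -
    obtain D where D: "\<forall>t\<in>{c..d}. hs_deriv_within \<alpha> (D t) t {c..d}" "hs_cont_on {c..d} D"
      using pc[OF cs] by blast
    have hsD: "\<forall>t\<in>{c..d}. hs (D t)" using D(1) by (simp add: hs_deriv_within_def)
    have hsS: "\<forall>s\<in>{c..d}. hs (msub (\<alpha> s) mid)" using sub[OF cs] hsG by blast
    have "\<forall>t\<in>{c..d}. (a has_vector_derivative hsl (D t)) (at t within {c..d})"
      using bridge_deriv[OF hsS] D(1) hsD unfolding a_def by blast
    moreover have "continuous_on {c..d} (\<lambda>t. hsl (D t))" using bridge_cont[OF hsD] D(2) by blast
    ultimately show ?thesis using hsD by blast
  qed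
  have ca: "continuous_on {0..1} a"
  proof (rule glue_cont[OF T])
    fix c d assume cs: "cons T c d"
    obtain D where D: "\<forall>t\<in>{c..d}. hs (D t) \<and> (a has_vector_derivative hsl (D t)) (at t within {c..d})"
      using piece[OF cs] by blast
    show "continuous_on {c..d} a"
      unfolding continuous_on_eq_continuous_within
      using D has_vector_derivative_continuous by blast
  qed
  have cb: "continuous_on {0..1} b"
    by (rule inverse_continuous[OF ca]) (use ab in blast)
  have derv: "hs (hs_vel \<alpha> s) \<and> (a has_vector_derivative hsl (hs_vel \<alpha> s)) (at s)"
    if s: "s \<in> {0<..<1} - T" for s
  proof -
    obtain c d where cs: "cons T c d" and cd: "c \<le> s" "s < d"
      using piece_right[of T s] T s by auto
    have cs': "c \<noteq> s" using cs s by (auto simp: cons_def)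
    obtain D where D: "\<forall>t\<in>{c..d}. hs (D t) \<and> (a has_vector_derivative hsl (D t)) (at t within {c..d})"
      using piece[OF cs] by blast
    have sin: "s \<in> {c<..<d}" using cd cs' by auto
    have d0: "(a has_vector_derivative hsl (D s)) (at s within {c..d})" using D sin by auto
    have "at s within {c..d} = at s" using sin by (intro at_within_interior) simp
    with d0 have d1: "(a has_vector_derivative hsl (D s)) (at s)" by simp
    have hsS: "\<forall>s\<in>{0..1}. hs (msub (\<alpha> s) mid)" using hsG by blast
    have s01: "s \<in> {0..1}" using s by auto
    have "hs_deriv_within \<alpha> (D s) s {0..1}"
      using bridge_deriv[OF hsS s01] has_vector_derivative_at_within[OF d1] D sin unfolding a_def by auto
    then have v: "hs_deriv_within \<alpha> (hs_vel \<alpha> s) s {0..1}"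
      unfolding hs_vel_def by (rule someI[where P="\<lambda>D. hs_deriv_within \<alpha> D s {0..1}"])
    then have hv: "hs (hs_vel \<alpha> s)" by (simp add: hs_deriv_within_def)
    have "(a has_vector_derivative hsl (hs_vel \<alpha> s)) (at s within {0..1})"
      using bridge_deriv[OF hsS s01 hv] v unfolding a_def by blast
    moreover have "at s within {0..1} = at s" using s by (intro at_within_interior) simp
    ultimately have "(a has_vector_derivative hsl (hs_vel \<alpha> s)) (at s)" by simp
    then show ?thesis using hv by blast
  qed
  have int: "(\<lambda>t. hs_norm (mmul (minv (\<alpha> t)) (hs_vel \<alpha> t))) integrable_on {0..1}"
  proof (rule glue_integrable[OF T])
    fix c d assume cs: "cons T c d"
    obtain D where D: "\<forall>t\<in>{c..d}. hs (D t) \<and> (a has_vector_derivative hsl (D t)) (at t within {c..d})"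
      and cD: "continuous_on {c..d} (\<lambda>t. hsl (D t))"
      using piece[OF cs] by blast
    have cont: "continuous_on {c..d} (\<lambda>t. norm (b t * hsl (D t)))"
      by (intro continuous_intros cD continuous_on_subset[OF cb sub[OF cs]])
    show "(\<lambda>t. hs_norm (mmul (minv (\<alpha> t)) (hs_vel \<alpha> t))) integrable_on {c..d}"
    proof (rule integrable_spike_finite[of "{c,d}", OF _ _ integrable_continuous_interval[OF cont]])
      fix t assume t: "t \<in> {c..d} - {c, d}"
      then have tin: "t \<in> {c<..<d}" by auto
      have tT: "t \<in> {0<..<1} - T"
        using tin cs T by (auto simp: cons_def)
      have d0: "(a has_vector_derivative hsl (D t)) (at t within {c..d})" using D tin by auto
      have "at t within {c..d} = at t" using tin by (intro at_within_interior) simp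
      with d0 have d1: "(a has_vector_derivative hsl (D t)) (at t)" by simp
      have eq: "hsl (hs_vel \<alpha> t) = hsl (D t)"
        using vector_derivative_unique_at[OF conjunct2[OF derv[OF tT]] d1] .
      have "hs_vel \<alpha> t = D t" using hsl_inj[OF conjunct1[OF derv[OF tT]] _ eq] D tin by auto
      moreover have "\<alpha> t \<in> GL2" using inG tT by auto
      ultimately show "hs_norm (mmul (minv (\<alpha> t)) (hs_vel \<alpha> t)) = norm (b t * hsl (D t))"
        using ell_eq[of "\<alpha> t" "D t"] D tin unfolding b_def by auto
    qed simp
  qed
  have a_eq: "a = (\<lambda>t. lift (\<alpha> t))" by (simp add: a_def fun_eq_iff)
  have b_eq: "b = (\<lambda>t. lift (minv (\<alpha> t)))" by (simp add: b_def fun_eq_iff)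
  show ?thesis
    by (rule that[OF T ca[unfolded a_eq] cb[unfolded b_eq]]) (use derv int in \<open>auto simp: a_eq\<close>)
qed


lemma curve_estimate:
  fixes \<alpha> :: "real \<Rightarrow> 'i mat"
  assumes inG: "\<forall>t\<in>{0..1}. \<alpha> t \<in> GL2" and pw: "hs_pw_smooth \<alpha>"
    and Lh: "curve_length \<alpha> \<le> 1/2"
  shows "hs_norm (msub (\<alpha> 1) (\<alpha> 0)) \<le> 2 * norm (lift (\<alpha> 0)) * curve_length \<alpha>"
proof -
  obtain T where T: "finite T" "{0,1} \<subseteq> T" "T \<subseteq> {0..1}"
    and ca: "continuous_on {0..1} (\<lambda>t. lift (\<alpha> t))"
    and cb: "continuous_on {0..1} (\<lambda>t. lift (minv (\<alpha> t)))"
    and derv: "\<And>s. s \<in> {0<..<1} - T \<Longrightarrow> hs (hs_vel \<alpha> s) \<and>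
        ((\<lambda>t. lift (\<alpha> t)) has_vector_derivative hsl (hs_vel \<alpha> s)) (at s)"
    and int: "(\<lambda>t. hs_norm (mmul (minv (\<alpha> t)) (hs_vel \<alpha> t))) integrable_on {0..1}"
    by (rule curve_facts[OF inG pw]) blast
  define a where "a = (\<lambda>t. lift (\<alpha> t))"
  define b where "b = (\<lambda>t. lift (minv (\<alpha> t)))"
  define ell where "ell = (\<lambda>t. hs_norm (mmul (minv (\<alpha> t)) (hs_vel \<alpha> t)))"
  define L where "L = curve_length \<alpha>"
  have L_eq: "L = integral {0..1} ell" by (simp add: L_def curve_length_def ell_def)
  have lnn: "ell t \<ge> 0" for t by (simp add: ell_def hs_norm_nonneg)
  have Lnn: "L \<ge> 0" unfolding L_eq by (rule integral_nonneg) (use int lnn in \<open>auto simp: ell_def\<close>)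
  have int': "ell integrable_on {0..1}" using int by (simp add: ell_def)
  have ab: "a t * b t = 1 \<and> b t * a t = 1" if "t \<in> {0..1}" for t
    using GL2_minv(5,6)[of "\<alpha> t"] inG that by (simp add: a_def b_def)
  have ca': "continuous_on {0..1} a" using ca by (simp add: a_def)
  define Sb where "Sb = Sup ((\<lambda>t. norm (a t - a 0)) ` {0..1})"
  have bdd: "bdd_above ((\<lambda>t. norm (a t - a 0)) ` {0..1})"
  proof -
    have "continuous_on {0..1} (\<lambda>t. norm (a t - a 0))" by (intro continuous_intros ca')
    then have "compact ((\<lambda>t. norm (a t - a 0)) ` {0..1})"
      by (rule compact_continuous_image) simp
    then show ?thesis by (intro bounded_imp_bdd_above compact_imp_bounded)
  qed
  have leS: "norm (a t - a 0) \<le> Sb" if "t \<in> {0..1}" for t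
    unfolding Sb_def by (rule cSup_upper) (use that bdd in auto)
  have Snn: "Sb \<ge> 0" using leS[of 0] by simp
  define C where "C = norm (a 0) + Sb"
  have Cnn: "C \<ge> 0" by (simp add: C_def Snn)
  have key: "norm (a t - a 0) \<le> C * L" if t: "t \<in> {0..1}" for t
  proof -
    define vh where "vh s = (if s \<in> T then 0 else hsl (hs_vel \<alpha> s))" for s
    have t0: "0 \<le> t" and t1: "t \<le> 1" using t by auto
    have ftc: "(vh has_integral (a t - a 0)) {0..t}"
    proof (rule fundamental_theorem_of_calculus_interior_strong[OF T(1) t0])
      fix x assume x: "x \<in> {0<..<t} - T"
      then have "x \<in> {0<..<1} - T" using t1 by auto
      then show "(a has_vector_derivative vh x) (at x)"
        using derv x by (simp add: vh_def a_def)
    next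
      show "continuous_on {0..t} a" by (rule continuous_on_subset[OF ca']) (use t1 in auto)
    qed
    have bnd: "norm (vh x) \<le> C * ell x" if x: "x \<in> {0..t}" for x
    proof (cases "x \<in> T")
      case True then show ?thesis by (simp add: vh_def Cnn lnn)
    next
      case False
      have "x \<noteq> 0" "x \<noteq> 1" using False T(2) by auto
      then have x01: "x \<in> {0<..<1} - T" using x t1 False by auto
      then have xin: "x \<in> {0..1}" by auto
      have hv: "hs (hs_vel \<alpha> x)" using derv[OF x01] by blast
      have "a x * (b x * hsl (hs_vel \<alpha> x)) = (a x * b x) * hsl (hs_vel \<alpha> x)"
        by (simp only: mult.assoc)
      also have "\<dots> = vh x" using ab[OF xin] False by (simp add: vh_def)
      finally have e: "vh x = a x * (b x * hsl (hs_vel \<alpha> x))" by simp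
      have "norm (vh x) \<le> norm (a x) * norm (b x * hsl (hs_vel \<alpha> x))"
        unfolding e by (rule norm_mult_ineq)
      also have "norm (b x * hsl (hs_vel \<alpha> x)) = ell x"
        using ell_eq[of "\<alpha> x" "hs_vel \<alpha> x"] inG xin hv by (simp add: ell_def b_def)
      also have "norm (a x) \<le> C"
      proof -
        have "norm (a x) \<le> norm (a 0) + norm (a x - a 0)" by (metis norm_triangle_sub add.commute)
        then show ?thesis using leS[OF xin] by (simp add: C_def)
      qed
      then have "norm (a x) * ell x \<le> C * ell x" by (rule mult_right_mono) (rule lnn)
      finally show ?thesis .
    qed
    have intt: "ell integrable_on {0..t}" by (rule integrable_on_subinterval[OF int']) (use t1 in auto)
    have gint: "(\<lambda>x. C * ell x) integrable_on {0..t}" using integrable_on_cmult_left[OF intt, of C] by simp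
    have gint1: "(\<lambda>x. C * ell x) integrable_on {0..1}" using integrable_on_cmult_left[OF int', of C] by simp
    have i1: "integral {0..t} vh = a t - a 0" using ftc by (rule integral_unique)
    have i2: "norm (integral {0..t} vh) \<le> integral {0..t} (\<lambda>x. C * ell x)"
      by (rule Henstock_Kurzweil_Integration.integral_norm_bound_integral[OF has_integral_integrable[OF ftc] gint bnd])
    have i3: "integral {0..t} (\<lambda>x. C * ell x) \<le> integral {0..1} (\<lambda>x. C * ell x)"
      by (rule integral_subset_le[OF _ gint gint1]) (use t1 Cnn lnn in auto)
    have i4: "integral {0..1} (\<lambda>x. C * ell x) = C * L"
      unfolding L_eq by (rule integral_mult[OF int', symmetric])
    have "norm (a t - a 0) \<le> integral {0..t} (\<lambda>x. C * ell x)" using i1 i2 by simp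
    then show ?thesis using i3 i4 by linarith
  qed
  have "Sb \<le> C * L"
    unfolding Sb_def by (rule cSup_least) (use key in auto)
  then have "Sb \<le> norm (a 0) * L + Sb * L" by (simp add: C_def algebra_simps)
  also have "\<dots> \<le> norm (a 0) * L + Sb * (1/2)"
    using Lh Snn by (intro add_left_mono mult_left_mono) (auto simp: L_def)
  finally have "Sb \<le> 2 * norm (a 0) * L" by linarith
  moreover have "hs_norm (msub (\<alpha> 1) (\<alpha> 0)) = norm (a 1 - a 0)"
    using norm_lift_diff[of "\<alpha> 1" "\<alpha> 0"] GL2_minv(1)[of "\<alpha> 1"] GL2_minv(1)[of "\<alpha> 0"] inG by (simp add: a_def)
  moreover have "norm (a 1 - a 0) \<le> Sb" by (rule leS) simp
  ultimately show ?thesis by (simp add: L_def a_def)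
qed


lemma mat_of_add: "mat_of (x + y) = (\<lambda>i j. mat_of x i j + mat_of y i j)"
  by (simp add: mat_of_def plus_ua.rep_eq fun_eq_iff algebra_simps)
lemma mat_of_diff: "mat_of (x - y) = msub (mat_of x) (mat_of y)"
  by (simp add: mat_of_def minus_ua.rep_eq msub_def fun_eq_iff algebra_simps)
lemma mat_of_scaleR: "mat_of (r *\<^sub>R x) = (\<lambda>i j. complex_of_real r * mat_of x i j)"
  by (simp add: mat_of_def scaleR_ua.rep_eq fun_eq_iff algebra_simps)
lemma mat_of_zero: "mat_of (0::'i ua) = (\<lambda>i j. 0)"
  by (simp add: mat_of_def zero_ua.rep_eq)
lemma mat_of_sum: "finite A \<Longrightarrow> mat_of (\<Sum>k\<in>A. f k) = (\<lambda>i j. \<Sum>k\<in>A. mat_of (f k) i j)"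
  by (induction A rule: finite_induct) (simp_all add: mat_of_zero mat_of_add)

lemma fst1:
  assumes "fst (rep_ua z) = 1"
  shows "hs (msub (mat_of z) mid)" "lift (mat_of z) = z"
proof -
  have e: "msub (mat_of z) mid = snd (rep_ua z)"
    using assms by (simp add: mat_of_def msub_def fun_eq_iff)
  then show "hs (msub (mat_of z) mid)" by simp
  have "rep_ua (lift (mat_of z)) = rep_ua z"
    using rep_lift[of "mat_of z"] e assms by (simp add: prod_eq_iff)
  then show "lift (mat_of z) = z" by (simp add: rep_ua_inject)
qed

lemma bl_fst: "bounded_linear (\<lambda>x::'i ua. fst (rep_ua x))"
proof (rule bounded_linear_intro[where K=1])
  fix x y :: "'i ua" and r :: real
  show "fst (rep_ua (x + y)) = fst (rep_ua x) + fst (rep_ua y)" by (simp add: plus_ua.rep_eq)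
  show "fst (rep_ua (r *\<^sub>R x)) = r *\<^sub>R fst (rep_ua x)" unfolding scaleR_ua.rep_eq by (simp add: scaleR_conv_of_real)
  show "norm (fst (rep_ua x)) \<le> norm x * 1" using cmod_le_norm_ua by simp
qed

lemma fst_pow: "fst (rep_ua (x ^ n)) = fst (rep_ua x) ^ n"
  by (induction n) (simp_all add: one_ua.rep_eq fst_rep_mult)

lemma fst_hsl: "hs Y \<Longrightarrow> fst (rep_ua (hsl Y)) = 0"
  by (simp add: rep_hsl)

lemma mpow_mat: "hs Y \<Longrightarrow> mpow Y k = mat_of ((hsl Y) ^ k)"
  by (induction k) (simp_all add: mat_of_one mat_of_mult mat_of_hsl)

lemma fst_exp:
  assumes "hs Y" shows "fst (rep_ua (exp (hsl Y))) = 1"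
proof -
  have "(\<lambda>n. fst (rep_ua ((hsl Y) ^ n /\<^sub>R fact n))) sums fst (rep_ua (exp (hsl Y)))"
    by (rule bounded_linear.sums[OF bl_fst exp_converges])
  moreover have "(\<lambda>n. fst (rep_ua ((hsl Y) ^ n /\<^sub>R fact n))) = (\<lambda>n. if n = 0 then 1 else 0)"
    by (auto simp: fun_eq_iff scaleR_ua.rep_eq fst_pow fst_hsl[OF assms])
  ultimately have "(\<lambda>n. if n = 0 then (1::complex) else 0) sums fst (rep_ua (exp (hsl Y)))" by simp
  moreover have "(\<lambda>n. if n = 0 then (1::complex) else 0) sums 1" using sums_single[of 0 "\<lambda>_. 1::complex"] by simp
  ultimately show ?thesis using sums_unique2 by blast
qed

lemma mexp_partial_eq:
  assumes "hs Y"
  shows "mexp_partial Y n = mat_of (\<Sum>k<n. (hsl Y) ^ k /\<^sub>R fact k)"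
  by (simp add: mexp_partial_def mat_of_sum mat_of_scaleR mpow_mat[OF assms] fun_eq_iff divide_inverse
      mult.commute of_real_inverse)

lemma fst_partial:
  assumes "hs Y" "n \<ge> 1"
  shows "fst (rep_ua (\<Sum>k<n. (hsl Y) ^ k /\<^sub>R fact k)) = 1"
proof -
  have "fst (rep_ua (\<Sum>k<n. (hsl Y) ^ k /\<^sub>R fact k)) = (\<Sum>k<n. fst (rep_ua ((hsl Y) ^ k /\<^sub>R fact k)))"
    by (induction n) (simp_all add: plus_ua.rep_eq zero_ua.rep_eq)
  also have "\<dots> = (\<Sum>k<n. if k = 0 then 1 else 0)"
    by (rule sum.cong) (auto simp: scaleR_ua.rep_eq fst_pow fst_hsl[OF assms(1)])
  also have "\<dots> = 1" using assms(2) by (simp add: sum.delta)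
  finally show ?thesis .
qed

lemma mexp_eq:
  assumes "hs Y"
  shows "mexp Y = mat_of (exp (hsl Y))"
proof -
  define P where "P n = (\<Sum>k<n. (hsl Y) ^ k /\<^sub>R fact k)" for n
  define E where "E = exp (hsl Y)"
  have PE: "P \<longlonglongrightarrow> E" using exp_converges[of "hsl Y"] unfolding sums_def P_def E_def .
  have fE: "fst (rep_ua E) = 1" using fst_exp[OF assms] by (simp add: E_def)
  have fP: "fst (rep_ua (P n)) = 1" if "n \<ge> 1" for n using fst_partial[OF assms that] by (simp add: P_def)
  have conv: "(\<lambda>n. hs_norm (msub (mexp_partial Y n) E')) \<longlonglongrightarrow> 0 \<longleftrightarrow> P \<longlonglongrightarrow> lift E'"
    if hE: "hs (msub E' mid)" for E'
  proof -
    have fl: "fst (rep_ua (lift E')) = 1" using rep_lift[OF hE] by simp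
    have ev: "\<forall>\<^sub>F n in sequentially. hs_norm (msub (mexp_partial Y n) E') = norm (P n - lift E')"
    proof (rule eventually_sequentiallyI[of 1])
      fix n :: nat assume n: "n \<ge> 1"
      have "mexp_partial Y n = mat_of (P n)" by (simp add: mexp_partial_eq[OF assms] P_def)
      moreover have "E' = mat_of (lift E')" using mat_of_lift[OF hE] by simp
      ultimately have "msub (mexp_partial Y n) E' = mat_of (P n - lift E')"
        by (simp add: mat_of_diff)
      moreover have "fst (rep_ua (P n - lift E')) = 0" using fP[OF n] fl by (simp add: minus_ua.rep_eq)
      ultimately show "hs_norm (msub (mexp_partial Y n) E') = norm (P n - lift E')"
        by (simp add: norm_scalar0)
    qed
    show ?thesis
      using tendsto_cong[OF ev] tendsto_norm_iff[of P "lift E'" sequentially] by simp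
  qed
  have hE0: "hs (msub (mat_of E) mid)" and lE0: "lift (mat_of E) = E" using fst1[OF fE] by auto
  show ?thesis unfolding mexp_def
  proof (rule the_equality)
    show "hs (msub (mat_of (exp (hsl Y))) mid) \<and>
        (\<lambda>n. hs_norm (msub (mexp_partial Y n) (mat_of (exp (hsl Y))))) \<longlonglongrightarrow> 0"
      using hE0 conv[OF hE0] lE0 PE by (simp add: E_def)
  next
    fix E' assume h: "hs (msub E' mid) \<and> (\<lambda>n. hs_norm (msub (mexp_partial Y n) E')) \<longlonglongrightarrow> 0"
    then have "P \<longlonglongrightarrow> lift E'" using conv by blast
    then have "lift E' = E" using PE LIMSEQ_unique by blast
    then show "E' = mat_of (exp (hsl Y))" using mat_of_lift h by (metis E_def)
  qed
qed


definition upw_on :: "real set \<Rightarrow> (real \<Rightarrow> 'i ua) \<Rightarrow> bool" where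
  "upw_on T a \<longleftrightarrow> finite T \<and> {0,1} \<subseteq> T \<and> T \<subseteq> {0..1} \<and>
     (\<forall>c d. cons T c d \<longrightarrow> (\<exists>d'. (\<forall>t\<in>{c..d}. (a has_vector_derivative d' t) (at t within {c..d})
        \<and> fst (rep_ua (d' t)) = 0) \<and> continuous_on {c..d} d'))"

lemma hsl_snd: "fst (rep_ua y) = 0 \<Longrightarrow> hsl (snd (rep_ua y)) = y"
  by (metis prod.collapse rep_hsl rep_ua_hs rep_ua_inject)

lemma pw_to_ua:
  assumes hsA: "\<forall>t\<in>{0..1}. hs (msub (\<alpha> t) mid)" and pw: "hs_pw_smooth \<alpha>"
  shows "\<exists>T. upw_on T (\<lambda>t. lift (\<alpha> t))"
proof -
  obtain T where T: "finite T" "{0,1} \<subseteq> T" "T \<subseteq> {0..1}"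
    and H: "\<forall>a\<in>T. \<forall>b\<in>T. a < b \<and> {a<..<b} \<inter> T = {} \<longrightarrow>
        (\<exists>D. (\<forall>t\<in>{a..b}. hs_deriv_within \<alpha> (D t) t {a..b}) \<and> hs_cont_on {a..b} D)"
    using pw unfolding hs_pw_smooth_def by blast
  have "\<exists>d'. (\<forall>t\<in>{c..d}. ((\<lambda>t. lift (\<alpha> t)) has_vector_derivative d' t) (at t within {c..d})
        \<and> fst (rep_ua (d' t)) = 0) \<and> continuous_on {c..d} d'" if cs: "cons T c d" for c d
  proof -
    have cc: "c \<in> T" "d \<in> T" "c < d \<and> {c<..<d} \<inter> T = {}" using cs by (auto simp: cons_def)
    obtain D where D: "\<forall>t\<in>{c..d}. hs_deriv_within \<alpha> (D t) t {c..d}" "hs_cont_on {c..d} D"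
      using H[rule_format, OF cc(1) cc(2) cc(3)] by blast
    have hsD: "\<forall>t\<in>{c..d}. hs (D t)" using D(1) by (simp add: hs_deriv_within_def)
    have "c \<in> {0..1}" "d \<in> {0..1}" using cs T(3) by (auto simp: cons_def)
    then have hsS: "\<forall>s\<in>{c..d}. hs (msub (\<alpha> s) mid)" using hsA by auto
    have "\<forall>t\<in>{c..d}. ((\<lambda>t. lift (\<alpha> t)) has_vector_derivative hsl (D t)) (at t within {c..d})"
      using bridge_deriv[OF hsS] D(1) hsD by blast
    moreover have "continuous_on {c..d} (\<lambda>t. hsl (D t))" using bridge_cont[OF hsD] D(2) by blast
    moreover have "\<forall>t\<in>{c..d}. fst (rep_ua (hsl (D t))) = 0" using hsD by (simp add: rep_hsl)
    ultimately show ?thesis by (intro exI[of _ "\<lambda>t. hsl (D t)"]) blast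
  qed
  then show ?thesis using T unfolding upw_on_def by blast
qed

lemma pw_from_ua:
  assumes hsA: "\<forall>t\<in>{0..1}. hs (msub (\<alpha> t) mid)" and u: "upw_on T (\<lambda>t. lift (\<alpha> t))"
  shows "hs_pw_smooth \<alpha>"
proof -
  have T: "finite T" "{0,1} \<subseteq> T" "T \<subseteq> {0..1}" using u by (auto simp: upw_on_def)
  have U: "\<forall>c d. cons T c d \<longrightarrow> (\<exists>d'. (\<forall>t\<in>{c..d}. ((\<lambda>t. lift (\<alpha> t)) has_vector_derivative d' t) (at t within {c..d})
        \<and> fst (rep_ua (d' t)) = 0) \<and> continuous_on {c..d} d')"
    using u unfolding upw_on_def by (elim conjE)
  have main: "\<exists>D. (\<forall>t\<in>{a..b}. hs_deriv_within \<alpha> (D t) t {a..b}) \<and> hs_cont_on {a..b} D"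
    if ab: "a \<in> T" "b \<in> T" "a < b" "{a<..<b} \<inter> T = {}" for a b
  proof -
    have cs: "cons T a b" using ab by (simp add: cons_def)
    obtain d' where d': "\<forall>t\<in>{a..b}. ((\<lambda>t. lift (\<alpha> t)) has_vector_derivative d' t) (at t within {a..b})
        \<and> fst (rep_ua (d' t)) = 0" "continuous_on {a..b} d'"
      using U[rule_format, OF cs] by (elim exE conjE) blast
    define D where "D t = snd (rep_ua (d' t))" for t
    have hsD: "\<forall>t\<in>{a..b}. hs (D t)" by (simp add: D_def)
    have eq: "hsl (D t) = d' t" if "t \<in> {a..b}" for t
    proof -
      have "fst (rep_ua (d' t)) = 0" using d'(1) that by blast
      then show ?thesis unfolding D_def by (rule hsl_snd)
    qed
    have "a \<in> {0..1}" "b \<in> {0..1}" using ab T(3) by auto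
    then have hsS: "\<forall>s\<in>{a..b}. hs (msub (\<alpha> s) mid)" using hsA by auto
    have "\<forall>t\<in>{a..b}. hs_deriv_within \<alpha> (D t) t {a..b}"
      using bridge_deriv[OF hsS] hsD eq d'(1) by simp
    moreover have "hs_cont_on {a..b} D"
    proof -
      have "continuous_on {a..b} (\<lambda>t. hsl (D t))"
        using continuous_on_cong[OF refl, of "{a..b}" "\<lambda>t. hsl (D t)" d'] eq d'(2) by simp
      then show ?thesis using bridge_cont[OF hsD] by blast
    qed
    ultimately show ?thesis by blast
  qed
  show ?thesis unfolding hs_pw_smooth_def
  proof (rule exI[of _ T], intro conjI T ballI impI)
    fix a b assume "a \<in> T" "b \<in> T" "a < b \<and> {a<..<b} \<inter> T = {}"
    then show "\<exists>D. (\<forall>t\<in>{a..b}. hs_deriv_within \<alpha> (D t) t {a..b}) \<and> hs_cont_on {a..b} D"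
      using main by blast
  qed
qed

lemma upw_const: "upw_on {0,1} (\<lambda>t. c)"
proof -
  have "cons {0,1} c' d \<Longrightarrow> (\<exists>d'. (\<forall>t\<in>{c'..d}. ((\<lambda>t. c) has_vector_derivative d' t) (at t within {c'..d})
        \<and> fst (rep_ua (d' t)) = 0) \<and> continuous_on {c'..d} d')" for c' d
    by (rule exI[of _ "\<lambda>t. 0"]) (simp add: zero_ua.rep_eq)
  then show ?thesis by (simp add: upw_on_def)
qed

lemma hsl_scale: "hs X \<Longrightarrow> hsl (mscale t X) = t *\<^sub>R hsl X"
proof -
  assume h: "hs X"
  have hs2: "hs (mscale t X)" using h by (simp add: mscale_def)
  show ?thesis
    by (rule rep_ua_inject[THEN iffD1]) (simp add: rep_hsl[OF hs2, unfolded mscale_def] rep_hsl[OF h] scaleR_ua.rep_eq mscale_def)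
qed

lemma lift_mexp:
  assumes "hs X"
  shows "hs (msub (mexp (mscale t X)) mid)" "lift (mexp (mscale t X)) = exp (t *\<^sub>R hsl X)"
proof -
  have hs2: "hs (mscale t X)" using assms by (simp add: mscale_def)
  have e: "mexp (mscale t X) = mat_of (exp (t *\<^sub>R hsl X))"
    using mexp_eq[OF hs2] hsl_scale[OF assms] by simp
  have f: "fst (rep_ua (exp (t *\<^sub>R hsl X))) = 1"
    using fst_exp[OF hs2] hsl_scale[OF assms] by simp
  show "hs (msub (mexp (mscale t X)) mid)" "lift (mexp (mscale t X)) = exp (t *\<^sub>R hsl X)"
    using fst1[OF f] e by auto
qed

lemma lift_mmul:
  assumes "hs (msub g mid)" "hs (msub h mid)"
  shows "hs (msub (mmul g h) mid)" "lift (mmul g h) = lift g * lift h"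
proof -
  have f: "fst (rep_ua (lift g * lift h)) = 1" by (simp add: fst_rep_mult rep_lift assms)
  have m: "mat_of (lift g * lift h) = mmul g h" by (simp add: mat_of_mult mat_of_lift assms)
  show "hs (msub (mmul g h) mid)" "lift (mmul g h) = lift g * lift h"
    using fst1[OF f] m by auto
qed


lemma upw_cong:
  assumes u: "upw_on T a" and eq: "\<And>t. t \<in> {0..1} \<Longrightarrow> a t = b t"
  shows "upw_on T b"
proof -
  have T: "finite T" "{0,1} \<subseteq> T" "T \<subseteq> {0..1}" using u by (auto simp: upw_on_def)
  have U: "\<forall>c d. cons T c d \<longrightarrow> (\<exists>d'. (\<forall>t\<in>{c..d}. (a has_vector_derivative d' t) (at t within {c..d})
        \<and> fst (rep_ua (d' t)) = 0) \<and> continuous_on {c..d} d')"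
    using u unfolding upw_on_def by (elim conjE)
  have "\<exists>d'. (\<forall>t\<in>{c..d}. (b has_vector_derivative d' t) (at t within {c..d})
        \<and> fst (rep_ua (d' t)) = 0) \<and> continuous_on {c..d} d'" if cs: "cons T c d" for c d
  proof -
    obtain d' where d': "\<forall>t\<in>{c..d}. (a has_vector_derivative d' t) (at t within {c..d}) \<and> fst (rep_ua (d' t)) = 0"
      "continuous_on {c..d} d'"
      using U[rule_format, OF cs] by (elim exE conjE) blast
    have sub: "{c..d} \<subseteq> {0..1}" using cs T(3) by (auto simp: cons_def)
    have "\<forall>t\<in>{c..d}. (b has_vector_derivative d' t) (at t within {c..d})"
    proof
      fix t assume t: "t \<in> {c..d}"
      show "(b has_vector_derivative d' t) (at t within {c..d})"
        by (rule has_vector_derivative_transform[OF t _ conjunct1[OF d'(1)[rule_format, OF t]]])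
           (use eq sub in auto)
    qed
    then show ?thesis using d' by (intro exI[of _ d']) blast
  qed
  then show ?thesis using T unfolding upw_on_def by (intro conjI) auto
qed

lemma exp_path_deriv:
  "((\<lambda>t. exp (t *\<^sub>R x)) has_vector_derivative exp (t *\<^sub>R x) * x) (at t within S)"
  for x :: "'i ua"
  by (rule exp_scaleR_has_vector_derivative_right)

lemma exp_path_cont: "continuous_on S (\<lambda>t. exp (t *\<^sub>R (x::'i ua)))"
  by (rule continuous_on_vector_derivative) (rule exp_path_deriv)

lemma upw_mult_exp:
  assumes u: "upw_on T a" and x: "fst (rep_ua x) = 0"
  shows "upw_on T (\<lambda>t. a t * exp (t *\<^sub>R x))"
proof -
  have T: "finite T" "{0,1} \<subseteq> T" "T \<subseteq> {0..1}" using u by (auto simp: upw_on_def)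
  have U: "\<forall>c d. cons T c d \<longrightarrow> (\<exists>d'. (\<forall>t\<in>{c..d}. (a has_vector_derivative d' t) (at t within {c..d})
        \<and> fst (rep_ua (d' t)) = 0) \<and> continuous_on {c..d} d')"
    using u unfolding upw_on_def by (elim conjE)
  have "\<exists>d''. (\<forall>t\<in>{c..d}. ((\<lambda>t. a t * exp (t *\<^sub>R x)) has_vector_derivative d'' t) (at t within {c..d})
        \<and> fst (rep_ua (d'' t)) = 0) \<and> continuous_on {c..d} d''" if cs: "cons T c d" for c d
  proof -
    obtain d' where d': "\<forall>t\<in>{c..d}. (a has_vector_derivative d' t) (at t within {c..d}) \<and> fst (rep_ua (d' t)) = 0"
      "continuous_on {c..d} d'"
      using U[rule_format, OF cs] by (elim exE conjE) blast
    define d'' where "d'' t = a t * (exp (t *\<^sub>R x) * x) + d' t * exp (t *\<^sub>R x)" for t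
    have der: "((\<lambda>t. a t * exp (t *\<^sub>R x)) has_vector_derivative d'' t) (at t within {c..d})"
      if t: "t \<in> {c..d}" for t
      unfolding d''_def
      by (rule has_vector_derivative_mult[OF conjunct1[OF d'(1)[rule_format, OF t]] exp_path_deriv])
    have fst0: "fst (rep_ua (d'' t)) = 0" if t: "t \<in> {c..d}" for t
      using d'(1) t x by (simp add: d''_def plus_ua.rep_eq fst_rep_mult)
    have ca: "continuous_on {c..d} a"
      by (rule continuous_on_vector_derivative) (use d'(1) in blast)
    have "continuous_on {c..d} d''"
      unfolding d''_def
      by (intro continuous_on_add continuous_on_mult ca d'(2) exp_path_cont continuous_on_const)
    then show ?thesis using der fst0 by (intro exI[of _ d'']) blast
  qed
  then show ?thesis using T unfolding upw_on_def by (intro conjI) auto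
qed


lemma lift_mid: "lift (mid::'i mat) = 1"
  by (rule rep_ua_inject[THEN iffD1]) (simp add: rep_lift msub_def one_ua.rep_eq hs_zero)

lemma mexp_zero_scale: "hs X \<Longrightarrow> mexp (mscale 0 X) = mid"
proof -
  assume h: "hs X"
  have "lift (mexp (mscale 0 X)) = 1" using lift_mexp(2)[OF h, of 0] by simp
  then show ?thesis using lift_inj[OF lift_mexp(1)[OF h, of 0], of mid] lift_mid
    by (simp add: msub_def mid_def hs_zero)
qed

lemma mscale_one: "mscale 1 X = X"
  by (simp add: mscale_def)

lemma const_path: "hs (msub p mid) \<Longrightarrow> hs_pw_smooth (\<lambda>t. p)"
  by (rule pw_from_ua[OF _ upw_const]) auto

lemma path_mult_exp:
  assumes sub: "is_subgroup_GL2 G" and pw: "hs_pw_smooth \<alpha>" and inG: "\<forall>t\<in>{0..1}. \<alpha> t \<in> G"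
    and X: "X \<in> lie_alg G"
  shows "hs_pw_smooth (\<lambda>t. mmul (\<alpha> t) (mexp (mscale t X)))"
    "\<forall>t\<in>{0..1}. mmul (\<alpha> t) (mexp (mscale t X)) \<in> G"
    "mmul (\<alpha> 0) (mexp (mscale 0 X)) = \<alpha> 0"
    "mmul (\<alpha> 1) (mexp (mscale 1 X)) = mmul (\<alpha> 1) (mexp X)"
proof -
  have GG: "G \<subseteq> GL2" and mulG: "\<forall>g\<in>G. \<forall>h\<in>G. mmul g h \<in> G" using sub by (auto simp: is_subgroup_GL2_def)
  have hX: "hs X" and eG: "\<And>t. mexp (mscale t X) \<in> G" using X by (auto simp: lie_alg_def)
  have hsA: "\<forall>t\<in>{0..1}. hs (msub (\<alpha> t) mid)" using inG GG GL2_minv(1) by blast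
  show "\<forall>t\<in>{0..1}. mmul (\<alpha> t) (mexp (mscale t X)) \<in> G" using inG eG mulG by blast
  obtain T where u: "upw_on T (\<lambda>t. lift (\<alpha> t))" using pw_to_ua[OF hsA pw] by blast
  have u2: "upw_on T (\<lambda>t. lift (\<alpha> t) * exp (t *\<^sub>R hsl X))"
    by (rule upw_mult_exp[OF u]) (simp add: fst_hsl[OF hX])
  have hs2: "hs (msub (mmul (\<alpha> t) (mexp (mscale t X))) mid)"
    and l2: "lift (mmul (\<alpha> t) (mexp (mscale t X))) = lift (\<alpha> t) * exp (t *\<^sub>R hsl X)"
    if t: "t \<in> {0..1}" for t
    using lift_mmul[OF hsA[rule_format, OF t] lift_mexp(1)[OF hX, of t]] lift_mexp(2)[OF hX, of t] by auto
  have u3: "upw_on T (\<lambda>t. lift (mmul (\<alpha> t) (mexp (mscale t X))))"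
    by (rule upw_cong[OF u2]) (simp add: l2)
  show "hs_pw_smooth (\<lambda>t. mmul (\<alpha> t) (mexp (mscale t X)))"
    by (rule pw_from_ua[OF _ u3]) (use hs2 in blast)
  show "mmul (\<alpha> 0) (mexp (mscale 0 X)) = \<alpha> 0" by (simp add: mexp_zero_scale[OF hX] mmul_mid_right)
  show "mmul (\<alpha> 1) (mexp (mscale 1 X)) = mmul (\<alpha> 1) (mexp X)" by (simp add: mscale_one)
qed

lemma inv_bound:
  fixes a b a0 b0 :: "'a::real_normed_algebra_1"
  assumes "b * a = 1" "a0 * b0 = 1" "norm (a - a0) * norm b0 \<le> 1/2"
  shows "norm b \<le> 2 * norm b0"
proof -
  have "b * (a0 - a) * b0 = b * (a0 * b0) - (b * a) * b0"
    by (simp add: right_diff_distrib left_diff_distrib mult.assoc)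
  also have "\<dots> = b - b0" using assms by simp
  finally have id: "b = b0 + b * (a0 - a) * b0" by simp
  have "norm b \<le> norm b0 + norm (b * (a0 - a) * b0)" by (subst id) (rule norm_triangle_ineq)
  also have "norm (b * (a0 - a) * b0) \<le> norm b * norm (a0 - a) * norm b0"
    by (rule order_trans[OF norm_mult_ineq], rule mult_right_mono[OF norm_mult_ineq]) simp
  also have "\<dots> = norm b * (norm (a - a0) * norm b0)" by (simp add: norm_minus_commute mult.assoc)
  also have "\<dots> \<le> norm b * (1/2)" by (rule mult_left_mono[OF assms(3)]) simp
  finally show ?thesis by simp
qed


lemma near_bound:
  assumes "g \<in> GL2" "h \<in> GL2"
  shows "hs_norm (msub (mmul (minv g) h) mid) \<le> norm (lift (minv g)) * hs_norm (msub h g)"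
proof -
  have hg: "hs (msub g mid)" and hi: "hs (msub (minv g) mid)" and gi: "lift (minv g) * lift g = 1"
    using GL2_minv[OF assms(1)] by auto
  have hh: "hs (msub h mid)" using GL2_minv[OF assms(2)] by auto
  have hk: "hs (msub (mmul (minv g) h) mid)" and lk: "lift (mmul (minv g) h) = lift (minv g) * lift h"
    using lift_mmul[OF hi hh] by auto
  have hm: "hs (msub (mid::'a mat) mid)" by (simp add: msub_def hs_zero)
  have "hs_norm (msub (mmul (minv g) h) mid) = norm (lift (mmul (minv g) h) - lift mid)"
    using norm_lift_diff[OF hk hm] by simp
  also have "\<dots> = norm (lift (minv g) * (lift h - lift g))"
    by (simp add: lk lift_mid gi right_diff_distrib)
  also have "\<dots> \<le> norm (lift (minv g)) * norm (lift h - lift g)" by (rule norm_mult_ineq)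
  also have "norm (lift h - lift g) = hs_norm (msub h g)" by (rule norm_lift_diff[OF hh hg])
  finally show ?thesis .
qed

lemma mmul_minv_cancel:
  assumes "g \<in> GL2" "h \<in> GL2"
  shows "mmul g (mmul (minv g) h) = h"
proof -
  have hg: "hs (msub g mid)" and hi: "hs (msub (minv g) mid)" and gi: "lift g * lift (minv g) = 1"
    using GL2_minv[OF assms(1)] by auto
  have hh: "hs (msub h mid)" using GL2_minv[OF assms(2)] by auto
  have hk: "hs (msub (mmul (minv g) h) mid)" and lk: "lift (mmul (minv g) h) = lift (minv g) * lift h"
    using lift_mmul[OF hi hh] by auto
  have h2: "hs (msub (mmul g (mmul (minv g) h)) mid)"
    and l2: "lift (mmul g (mmul (minv g) h)) = lift g * lift (mmul (minv g) h)"
    using lift_mmul[OF hg hk] by auto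
  have "lift (mmul g (mmul (minv g) h)) = lift h"
    unfolding l2 lk by (simp add: mult.assoc[symmetric] gi)
  then show ?thesis using lift_inj[OF h2 hh] by blast
qed

definition pwpath :: "'i mat set \<Rightarrow> (real \<Rightarrow> 'i mat) \<Rightarrow> 'i mat \<Rightarrow> 'i mat \<Rightarrow> bool" where
  "pwpath G \<alpha> p q \<longleftrightarrow> hs_pw_smooth \<alpha> \<and> (\<forall>t\<in>{0..1}. \<alpha> t \<in> G) \<and> \<alpha> 0 = p \<and> \<alpha> 1 = q"

lemma extend_path:
  assumes sub: "is_subgroup_GL2 G"
    and chart: "\<And>k. k \<in> G \<Longrightarrow> hs_norm (msub k mid) < r0 \<Longrightarrow> \<exists>X\<in>lie_alg G. mexp X = k"
    and pa: "pwpath G \<alpha> p g" and hG: "h \<in> G"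
    and near: "hs_norm (msub (mmul (minv g) h) mid) < r0"
  shows "\<exists>\<beta>. pwpath G \<beta> p h"
proof -
  have GG: "G \<subseteq> GL2" and mulG: "\<forall>g\<in>G. \<forall>h\<in>G. mmul g h \<in> G" and invG: "\<forall>g\<in>G. minv g \<in> G"
    using sub by (auto simp: is_subgroup_GL2_def)
  have gG: "g \<in> G" using pa by (force simp: pwpath_def)
  have kG: "mmul (minv g) h \<in> G" using mulG invG gG hG by blast
  obtain X where X: "X \<in> lie_alg G" "mexp X = mmul (minv g) h" using chart[OF kG near] by blast
  have pw: "hs_pw_smooth \<alpha>" "\<forall>t\<in>{0..1}. \<alpha> t \<in> G" "\<alpha> 0 = p" "\<alpha> 1 = g" using pa by (auto simp: pwpath_def)
  note P = path_mult_exp[OF sub pw(1) pw(2) X(1)]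
  have "mmul (\<alpha> 1) (mexp (mscale 1 X)) = h"
    using P(4) X(2) pw(4) mmul_minv_cancel gG hG GG by auto
  then have "pwpath G (\<lambda>t. mmul (\<alpha> t) (mexp (mscale t X))) p h"
    unfolding pwpath_def using P(1,2,3) pw(3) by auto
  then show ?thesis by blast
qed


lemma hs_norm_msub_sym: "g \<in> GL2 \<Longrightarrow> h \<in> GL2 \<Longrightarrow> hs_norm (msub g h) = hs_norm (msub h g)"
  using norm_lift_diff[of g h] norm_lift_diff[of h g] GL2_minv(1)[of g] GL2_minv(1)[of h]
  by (simp add: norm_minus_commute)

lemma connected_paths:
  assumes bl: "banach_lie_subgroup G" and cn: "hs_connected G" and pG: "p \<in> G" and qG: "q \<in> G"
  shows "\<exists>\<alpha>. pwpath G \<alpha> p q"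
proof -
  have sub: "is_subgroup_GL2 G" using bl by (simp add: banach_lie_subgroup_def)
  have GG: "G \<subseteq> GL2" using sub by (simp add: is_subgroup_GL2_def)
  obtain e U where U: "hs_rel_open G U" "mid \<in> U" "bij_betw mexp {X\<in>lie_alg G. hs_norm X < e} U"
    using bl unfolding banach_lie_subgroup_def by (elim conjE exE) blast
  obtain r0 where r0: "r0 > 0" "\<forall>h\<in>G. hs_norm (msub h mid) < r0 \<longrightarrow> h \<in> U"
    using U(1,2) unfolding hs_rel_open_def by blast
  have chart: "\<exists>X\<in>lie_alg G. mexp X = k" if "k \<in> G" "hs_norm (msub k mid) < r0" for k
  proof -
    have "k \<in> U" using r0 that by blast
    then have "k \<in> mexp ` {X\<in>lie_alg G. hs_norm X < e}" using bij_betw_imp_surj_on[OF U(3)] by simp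
    then show ?thesis by blast
  qed
  define R where "R = {h\<in>G. \<exists>\<alpha>. pwpath G \<alpha> p h}"
  have pR: "p \<in> R"
  proof -
    have "hs (msub p mid)" using GL2_minv(1) pG GG by blast
    then have "pwpath G (\<lambda>t. p) p p" using const_path pG by (simp add: pwpath_def)
    then show ?thesis using pG by (auto simp: R_def)
  qed
  have openR: "hs_rel_open G R"
    unfolding hs_rel_open_def
  proof (intro conjI ballI)
    show "R \<subseteq> G" by (auto simp: R_def)
    fix g assume gR: "g \<in> R"
    then have gG: "g \<in> G" and pa: "\<exists>\<alpha>. pwpath G \<alpha> p g" by (auto simp: R_def)
    define \<beta> where "\<beta> = norm (lift (minv g))"
    have b1: "\<beta> \<ge> 1" unfolding \<beta>_def using norm_lift_ge1 GL2_minv(2) gG GG by blast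
    show "\<exists>r>0. \<forall>h\<in>G. hs_norm (msub h g) < r \<longrightarrow> h \<in> R"
    proof (intro exI[of _ "r0 / \<beta>"] conjI ballI impI)
      show "r0 / \<beta> > 0" using r0 b1 by simp
      fix h assume hG: "h \<in> G" and hn: "hs_norm (msub h g) < r0 / \<beta>"
      have "hs_norm (msub (mmul (minv g) h) mid) \<le> \<beta> * hs_norm (msub h g)"
        unfolding \<beta>_def by (rule near_bound) (use gG hG GG in auto)
      also have "\<dots> < \<beta> * (r0 / \<beta>)" using hn b1 by (intro mult_strict_left_mono) auto
      also have "\<dots> = r0" using b1 by simp
      finally have near: "hs_norm (msub (mmul (minv g) h) mid) < r0" .
      obtain \<alpha> where "pwpath G \<alpha> p g" using pa by blast
      then have "\<exists>\<gamma>. pwpath G \<gamma> p h" using extend_path[OF sub chart _ hG near] by blast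
      then show "h \<in> R" using hG by (simp add: R_def)
    qed
  qed
  have openC: "hs_rel_open G (G - R)"
    unfolding hs_rel_open_def
  proof (intro conjI ballI)
    show "G - R \<subseteq> G" by auto
    fix g assume gC: "g \<in> G - R"
    then have gG: "g \<in> G" by auto
    define \<beta> where "\<beta> = norm (lift (minv g))"
    have b1: "\<beta> \<ge> 1" unfolding \<beta>_def using norm_lift_ge1 GL2_minv(2) gG GG by blast
    define r where "r = min (r0 / (2 * \<beta>)) (1 / (2 * \<beta>))"
    show "\<exists>r>0. \<forall>h\<in>G. hs_norm (msub h g) < r \<longrightarrow> h \<in> G - R"
    proof (intro exI[of _ r] conjI ballI impI)
      show "r > 0" using r0 b1 by (simp add: r_def)
      fix h assume hG: "h \<in> G" and hn: "hs_norm (msub h g) < r"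
      show "h \<in> G - R"
      proof (rule ccontr)
        assume "h \<notin> G - R"
        then have hR: "h \<in> R" using hG by auto
        then obtain \<alpha> where pa: "pwpath G \<alpha> p h" by (auto simp: R_def)
        have gL: "g \<in> GL2" and hL: "h \<in> GL2" using gG hG GG by auto
        have nh: "norm (lift h - lift g) = hs_norm (msub h g)"
          using norm_lift_diff GL2_minv(1)[OF gL] GL2_minv(1)[OF hL] by blast
        have "norm (lift h - lift g) * \<beta> \<le> (1 / (2 * \<beta>)) * \<beta>"
          using hn nh b1 by (intro mult_right_mono) (auto simp: r_def)
        also have "\<dots> = 1/2" using b1 by simp
        finally have sm: "norm (lift h - lift g) * norm (lift (minv g)) \<le> 1/2" by (simp add: \<beta>_def)
        have bh: "norm (lift (minv h)) \<le> 2 * \<beta>"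
          unfolding \<beta>_def by (rule inv_bound[OF GL2_minv(6)[OF hL] GL2_minv(5)[OF gL] sm])
        have "hs_norm (msub (mmul (minv h) g) mid) \<le> norm (lift (minv h)) * hs_norm (msub g h)"
          by (rule near_bound[OF hL gL])
        also have "\<dots> \<le> (2 * \<beta>) * hs_norm (msub h g)"
          unfolding hs_norm_msub_sym[OF gL hL] by (rule mult_right_mono[OF bh hs_norm_nonneg])
        also have "\<dots> < (2 * \<beta>) * (r0 / (2 * \<beta>))"
          using hn b1 by (intro mult_strict_left_mono) (auto simp: r_def)
        also have "\<dots> = r0" using b1 by simp
        finally have near: "hs_norm (msub (mmul (minv h) g) mid) < r0" .
        have "\<exists>\<gamma>. pwpath G \<gamma> p g" using extend_path[OF sub chart pa gG near] by blast
        then show False using gC by (auto simp: R_def)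
      qed
    qed
  qed
  have "G - R = {}"
  proof (rule ccontr)
    assume ne: "G - R \<noteq> {}"
    have "R \<inter> (G - R) = {}" "R \<union> (G - R) = G" "R \<noteq> {}" using pR by (auto simp: R_def)
    then show False using cn ne openR openC unfolding hs_connected_def by blast
  qed
  then have "q \<in> R" using qG by auto
  then show ?thesis by (auto simp: R_def)
qed


lemma curve_length_nonneg: "curve_length \<alpha> \<ge> 0"
proof (cases "(\<lambda>t. hs_norm (mmul (minv (\<alpha> t)) (hs_vel \<alpha> t))) integrable_on {0..1}")
  case True then show ?thesis unfolding curve_length_def
    by (rule Henstock_Kurzweil_Integration.integral_nonneg) (simp add: hs_norm_nonneg)
next
  case False then show ?thesis unfolding curve_length_def by (simp add: not_integrable_integral)
qed

lemma dI_bound: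
  assumes bl: "banach_lie_subgroup G" and cn: "hs_connected G" and pG: "p \<in> G" and qG: "q \<in> G"
    and d: "dI G p q < e" and e: "e \<le> 1/2"
  shows "hs_norm (msub q p) \<le> 2 * norm (lift p) * e"
proof -
  have GG: "G \<subseteq> GL2" using bl by (simp add: banach_lie_subgroup_def is_subgroup_GL2_def)
  define S where "S = {curve_length \<alpha> | \<alpha>. hs_pw_smooth \<alpha> \<and> (\<forall>t\<in>{0..1}. \<alpha> t \<in> G) \<and> \<alpha> 0 = p \<and> \<alpha> 1 = q}"
  obtain \<alpha>0 where "pwpath G \<alpha>0 p q" using connected_paths[OF bl cn pG qG] by blast
  then have "S \<noteq> {}" unfolding S_def pwpath_def by blast
  moreover have "Inf S < e" using d by (simp add: dI_def S_def)
  ultimately obtain s where "s \<in> S" "s < e" using cInf_lessD by blast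
  then obtain \<alpha> where a: "hs_pw_smooth \<alpha>" "\<forall>t\<in>{0..1}. \<alpha> t \<in> G" "\<alpha> 0 = p" "\<alpha> 1 = q"
    and L: "curve_length \<alpha> < e" unfolding S_def by blast
  have inGL: "\<forall>t\<in>{0..1}. \<alpha> t \<in> GL2" using a(2) GG by blast
  have "hs_norm (msub (\<alpha> 1) (\<alpha> 0)) \<le> 2 * norm (lift (\<alpha> 0)) * curve_length \<alpha>"
    by (rule curve_estimate[OF inGL a(1)]) (use L e in simp)
  also have "\<dots> \<le> 2 * norm (lift (\<alpha> 0)) * e"
    using L by (intro mult_left_mono) auto
  finally show ?thesis using a by simp
qed

theorem lemma4p4:
  fixes G :: "'i mat set" and x :: "nat \<Rightarrow> 'i mat"
  assumes "infinite (UNIV :: 'i set)"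
    and "banach_lie_subgroup G"
    and "hs_closed_in_GL2 G"
    and "hs_connected G"
    and "self_adjoint_set G"
    and "\<And>n. x n \<in> G"
    and "\<forall>e>0. \<exists>N. \<forall>n\<ge>N. \<forall>m\<ge>N. dI G (x n) (x m) < e"
  shows "\<forall>e>0. \<exists>N. \<forall>n\<ge>N. \<forall>m\<ge>N. hs_norm (msub (x n) (x m)) < e"
proof (intro allI impI)
  fix \<epsilon> :: real assume ep: "\<epsilon> > 0"
  note bl = assms(2) and cn = assms(4) and xG = assms(6) and C = assms(7)
  have GG: "G \<subseteq> GL2" using bl by (simp add: banach_lie_subgroup_def is_subgroup_GL2_def)
  have xL: "x n \<in> GL2" for n using xG GG by blast
  obtain N0 where N0: "\<forall>n\<ge>N0. \<forall>m\<ge>N0. dI G (x n) (x m) < 1/2" using C by (meson half_gt_zero zero_less_one)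
  define M where "M = norm (lift (x N0))"
  have M1: "M \<ge> 1" unfolding M_def using norm_lift_ge1 GL2_minv(1)[OF xL] by blast
  have bnd: "norm (lift (x n)) \<le> 2 * M" if n: "n \<ge> N0" for n
  proof -
    have "hs_norm (msub (x n) (x N0)) \<le> 2 * M * (1/2)"
      unfolding M_def by (rule dI_bound[OF bl cn xG xG]) (use N0 n in auto)
    moreover have "norm (lift (x n)) \<le> M + norm (lift (x n) - lift (x N0))"
      unfolding M_def by (metis norm_triangle_sub add.commute)
    moreover have "norm (lift (x n) - lift (x N0)) = hs_norm (msub (x n) (x N0))"
      using norm_lift_diff GL2_minv(1)[OF xL] by blast
    ultimately show ?thesis by simp
  qed
  define \<delta> where "\<delta> = min (1/2) (\<epsilon> / (8 * M))"
  have dpos: "\<delta> > 0" using ep M1 by (simp add: \<delta>_def)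
  obtain N1 where N1: "\<forall>n\<ge>N1. \<forall>m\<ge>N1. dI G (x n) (x m) < \<delta>" using C dpos by blast
  show "\<exists>N. \<forall>n\<ge>N. \<forall>m\<ge>N. hs_norm (msub (x n) (x m)) < \<epsilon>"
  proof (intro exI[of _ "max N0 N1"] allI impI)
    fix n m assume n: "n \<ge> max N0 N1" and m: "m \<ge> max N0 N1"
    have "hs_norm (msub (x n) (x m)) \<le> 2 * norm (lift (x m)) * \<delta>"
      by (rule dI_bound[OF bl cn xG xG]) (use N1 n m in \<open>auto simp: \<delta>_def\<close>)
    also have "\<dots> \<le> 2 * (2 * M) * \<delta>"
      using bnd[of m] m dpos by (intro mult_right_mono) auto
    also have "\<dots> = 4 * M * \<delta>" by simp
    also have "\<dots> \<le> 4 * M * (\<epsilon> / (8 * M))"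
      using M1 by (intro mult_left_mono) (auto simp: \<delta>_def)
    also have "\<dots> = \<epsilon> / 2" using M1 by (simp add: field_simps)
    also have "\<dots> < \<epsilon>" using ep by simp
    finally show "hs_norm (msub (x n) (x m)) < \<epsilon>" .
  qed
qed


end
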